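(* Let $G$ be a permutation group, $K$ a smooth $G$-field and $n>0$ an integer. Put $k:=K^G$ and $\mu_n:=\{z\in K^\times:z^n=1\}$. Then there is a natural exact sequence $$H^1_{\mathrm{cont}}(G,\mu_n)\to{}_n\mathrm{Pic}_K(G)\to(K^\times/K^{\times n})^G/k^\times\to H^2_{\mathrm{cont}}(G,\mu_n).$$ Moreover, if $G$ has no proper open subgroups of finite index, then every invertible object $\mathcal L$ of $\mathrm{Sm}_K(G)$ of order $n$ in $\mathrm{Pic}_K(G)$ is contained in a $G$-field $K(a^{1/n})$ for some $a$ whose class in $K^\times/K^{\times n}$ is $G$-invariant.
   Context: A permutation group is a Hausdorff topological group admitting a base of open sets consisting of left and right translates of subgroups. A smooth $G$-field is a field with a $G$-action by automorphisms with open stabilizers of all elements. $\mathrm{Sm}_K(G)$ is the category of smooth left modules over the skew group ring $K\langle G\rangle$ ($(a[g])(b[h])=ab^g[gh]$), a tensor category under $\otimes_K$ with unit $K$. An object is invertible if it is one-dimensional over $K$; $\mathrm{Pic}_K(G)$ is the group of isomorphism classes of invertible objects under $\otimes_K$ (equal to $H^1_{\mathrm{cont}}(G,K^\times)$), and ${}_n\mathrm{Pic}_K(G)$ its $n$-torsion subgroup. $H^i_{\mathrm{cont}}$ is continuous cohomology with discrete coefficients; $\mu_n$ carries the restricted $G$-action. $k^\times$ maps to $(K^\times/K^{\times n})^G$ via inclusion. "$\mathcal L$ is contained in $K(a^{1/n})$" means $\mathcal L$ embeds $G$-equivariantly as a $K$-subspace of a $G$-field extension $K(a^{1/n})$. 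*)

theory Defs
  imports "HOL-Analysis.Product_Topology" "HOL-Analysis.T1_Spaces"
          "HOL-Algebra.Coset" "HOL-Algebra.Ring"
begin

definition perm_group :: "'g monoid \<Rightarrow> 'g topology \<Rightarrow> bool" where
  "perm_group G T \<longleftrightarrow>
     group G \<and> topspace T = carrier G \<and> Hausdorff_space T \<and>
     continuous_map (prod_topology T T) T (\<lambda>(x, y). x \<otimes>\<^bsub>G\<^esub> y) \<and>
     continuous_map T T (\<lambda>x. inv\<^bsub>G\<^esub> x) \<and>
     (\<forall>U. openin T U \<longrightarrow> (\<forall>x\<in>U. \<exists>H g V. subgroup H G \<and> g \<in> carrier G \<and>
        (V = g <#\<^bsub>G\<^esub> H \<or> V = H #>\<^bsub>G\<^esub> g) \<and> openin T V \<and> x \<in> V \<and> V \<subseteq> U))"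

definition smooth_G_field :: "'g monoid \<Rightarrow> 'g topology \<Rightarrow> ('g \<Rightarrow> 'k::field \<Rightarrow> 'k) \<Rightarrow> bool" where
  "smooth_G_field G T \<sigma> \<longleftrightarrow>
     (\<forall>g\<in>carrier G. bij (\<sigma> g) \<and> (\<forall>x y. \<sigma> g (x + y) = \<sigma> g x + \<sigma> g y \<and> \<sigma> g (x * y) = \<sigma> g x * \<sigma> g y)) \<and>
     (\<forall>x. \<sigma> \<one>\<^bsub>G\<^esub> x = x) \<and>
     (\<forall>g\<in>carrier G. \<forall>h\<in>carrier G. \<forall>x. \<sigma> (g \<otimes>\<^bsub>G\<^esub> h) x = \<sigma> g (\<sigma> h x)) \<and>
     (\<forall>x. openin T {g \<in> carrier G. \<sigma> g x = x})"

definition Kunits :: "'k::field set" where "Kunits = {x. x \<noteq> 0}"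

definition mu :: "nat \<Rightarrow> 'k::field set" where "mu n = {z. z \<noteq> 0 \<and> z ^ n = 1}"

definition fixed_field :: "'g monoid \<Rightarrow> ('g \<Rightarrow> 'k \<Rightarrow> 'k) \<Rightarrow> 'k set" where
  "fixed_field G \<sigma> = {x. \<forall>g\<in>carrier G. \<sigma> g x = x}"

definition cont1 :: "'g monoid \<Rightarrow> 'g topology \<Rightarrow> 'k set \<Rightarrow> ('g \<Rightarrow> 'k) \<Rightarrow> bool" where
  "cont1 G T A f \<longleftrightarrow> (\<forall>g\<in>carrier G. f g \<in> A) \<and> (\<forall>a. openin T {g \<in> carrier G. f g = a})"

definition cont2 :: "'g monoid \<Rightarrow> 'g topology \<Rightarrow> 'k set \<Rightarrow> ('g \<times> 'g \<Rightarrow> 'k) \<Rightarrow> bool" where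
  "cont2 G T A f \<longleftrightarrow> (\<forall>g\<in>carrier G. \<forall>h\<in>carrier G. f (g, h) \<in> A) \<and>
     (\<forall>a. openin (prod_topology T T) {p \<in> carrier G \<times> carrier G. f p = a})"

definition Z1 :: "'g monoid \<Rightarrow> 'g topology \<Rightarrow> ('g \<Rightarrow> 'k::field \<Rightarrow> 'k) \<Rightarrow> 'k set \<Rightarrow> ('g \<Rightarrow> 'k) set" where
  "Z1 G T \<sigma> A = {f. cont1 G T A f \<and>
     (\<forall>g\<in>carrier G. \<forall>h\<in>carrier G. f (g \<otimes>\<^bsub>G\<^esub> h) = f g * \<sigma> g (f h))}"

definition cls1 :: "'g monoid \<Rightarrow> 'g topology \<Rightarrow> ('g \<Rightarrow> 'k::field \<Rightarrow> 'k) \<Rightarrow> 'k set \<Rightarrow> ('g \<Rightarrow> 'k) \<Rightarrow> ('g \<Rightarrow> 'k) set" where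
  "cls1 G T \<sigma> A c = {f \<in> Z1 G T \<sigma> A. \<exists>a\<in>A. \<forall>g\<in>carrier G. f g = c g * (\<sigma> g a / a)}"

definition H1 :: "'g monoid \<Rightarrow> 'g topology \<Rightarrow> ('g \<Rightarrow> 'k::field \<Rightarrow> 'k) \<Rightarrow> 'k set \<Rightarrow> ('g \<Rightarrow> 'k) set set" where
  "H1 G T \<sigma> A = cls1 G T \<sigma> A ` Z1 G T \<sigma> A"

definition Z2 :: "'g monoid \<Rightarrow> 'g topology \<Rightarrow> ('g \<Rightarrow> 'k::field \<Rightarrow> 'k) \<Rightarrow> 'k set \<Rightarrow> ('g \<times> 'g \<Rightarrow> 'k) set" where
  "Z2 G T \<sigma> A = {f. cont2 G T A f \<and>
     (\<forall>g\<in>carrier G. \<forall>h\<in>carrier G. \<forall>l\<in>carrier G.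
        \<sigma> g (f (h, l)) * f (g, h \<otimes>\<^bsub>G\<^esub> l) = f (g \<otimes>\<^bsub>G\<^esub> h, l) * f (g, h))}"

definition cls2 :: "'g monoid \<Rightarrow> 'g topology \<Rightarrow> ('g \<Rightarrow> 'k::field \<Rightarrow> 'k) \<Rightarrow> 'k set \<Rightarrow> ('g \<times> 'g \<Rightarrow> 'k) \<Rightarrow> ('g \<times> 'g \<Rightarrow> 'k) set" where
  "cls2 G T \<sigma> A c = {f \<in> Z2 G T \<sigma> A. \<exists>d. cont1 G T A d \<and>
     (\<forall>g\<in>carrier G. \<forall>h\<in>carrier G. f (g, h) = c (g, h) * (d g * \<sigma> g (d h) / d (g \<otimes>\<^bsub>G\<^esub> h)))}"

definition H2 :: "'g monoid \<Rightarrow> 'g topology \<Rightarrow> ('g \<Rightarrow> 'k::field \<Rightarrow> 'k) \<Rightarrow> 'k set \<Rightarrow> ('g \<times> 'g \<Rightarrow> 'k) set set" where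
  "H2 G T \<sigma> A = cls2 G T \<sigma> A ` Z2 G T \<sigma> A"

definition pick :: "'a set \<Rightarrow> 'a" where "pick X = (SOME x. x \<in> X)"

definition mult1 where
  "mult1 G T \<sigma> A X Y = cls1 G T \<sigma> A (\<lambda>g. pick X g * pick Y g)"
definition mult2 where
  "mult2 G T \<sigma> A X Y = cls2 G T \<sigma> A (\<lambda>p. pick X p * pick Y p)"

definition Pic where "Pic G T \<sigma> = H1 G T \<sigma> Kunits"

definition pic_pow where
  "pic_pow G T \<sigma> X k = cls1 G T \<sigma> Kunits (\<lambda>g. pick X g ^ k)"

definition pic_one where "pic_one G T \<sigma> = cls1 G T \<sigma> Kunits (\<lambda>g. 1)"

definition nPic where
  "nPic G T \<sigma> n = {X \<in> Pic G T \<sigma>. pic_pow G T \<sigma> X n = pic_one G T \<sigma>}"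

section \<open>The group (K^x / K^x^n)^G / k^x\<close>

definition Ginv_mod :: "'g monoid \<Rightarrow> ('g \<Rightarrow> 'k::field \<Rightarrow> 'k) \<Rightarrow> nat \<Rightarrow> 'k \<Rightarrow> bool" where
  "Ginv_mod G \<sigma> n a \<longleftrightarrow> a \<noteq> 0 \<and> (\<forall>g\<in>carrier G. \<exists>e. e \<noteq> 0 \<and> \<sigma> g a = a * e ^ n)"

definition Mcls :: "'g monoid \<Rightarrow> ('g \<Rightarrow> 'k::field \<Rightarrow> 'k) \<Rightarrow> nat \<Rightarrow> 'k \<Rightarrow> 'k set" where
  "Mcls G \<sigma> n a = {a'. Ginv_mod G \<sigma> n a' \<and>
     (\<exists>z e. z \<in> fixed_field G \<sigma> \<and> z \<noteq> 0 \<and> e \<noteq> 0 \<and> a' = a * z * e ^ n)}"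

definition Mgrp where "Mgrp G \<sigma> n = Mcls G \<sigma> n ` {a. Ginv_mod G \<sigma> n a}"

definition Mmult where "Mmult G \<sigma> n X Y = Mcls G \<sigma> n (pick X * pick Y)"

definition phi1 where "phi1 G T \<sigma> X = cls1 G T \<sigma> Kunits (pick X)"

definition phi2 where
  "phi2 G T \<sigma> n X = Mcls G \<sigma> n
     (SOME b. b \<noteq> 0 \<and> (\<forall>g\<in>carrier G. pick X g ^ n = \<sigma> g b / b))"

definition phi3 where
  "phi3 G T \<sigma> n Y =
     (let a = pick Y;
          d = (SOME d. cont1 G T Kunits d \<and> (\<forall>g\<in>carrier G. \<sigma> g a = a * d g ^ n))
      in cls2 G T \<sigma> (mu n) (\<lambda>(g, h). d g * \<sigma> g (d h) / d (g \<otimes>\<^bsub>G\<^esub> h)))"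

text \<open>A smooth K<G>-module on the type 'm (scalar multiplication sc, G-action rho,
semilinear: rho g (c m) = sigma_g(c) rho g m), one-dimensional over K.\<close>
definition invertible_obj ::
  "'g monoid \<Rightarrow> 'g topology \<Rightarrow> ('g \<Rightarrow> 'k::field \<Rightarrow> 'k) \<Rightarrow> ('k \<Rightarrow> 'm::ab_group_add \<Rightarrow> 'm) \<Rightarrow> ('g \<Rightarrow> 'm \<Rightarrow> 'm) \<Rightarrow> bool" where
  "invertible_obj G T \<sigma> sc \<rho> \<longleftrightarrow>
     (\<forall>a b m. sc (a + b) m = sc a m + sc b m) \<and> (\<forall>a m m'. sc a (m + m') = sc a m + sc a m') \<and>
     (\<forall>a b m. sc (a * b) m = sc a (sc b m)) \<and> (\<forall>m. sc 1 m = m) \<and>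
     (\<exists>v. v \<noteq> 0 \<and> (\<forall>m. \<exists>a. m = sc a v)) \<and>
     (\<forall>g\<in>carrier G. \<forall>m m'. \<rho> g (m + m') = \<rho> g m + \<rho> g m') \<and>
     (\<forall>g\<in>carrier G. \<forall>a m. \<rho> g (sc a m) = sc (\<sigma> g a) (\<rho> g m)) \<and>
     (\<forall>m. \<rho> \<one>\<^bsub>G\<^esub> m = m) \<and>
     (\<forall>g\<in>carrier G. \<forall>h\<in>carrier G. \<forall>m. \<rho> (g \<otimes>\<^bsub>G\<^esub> h) m = \<rho> g (\<rho> h m)) \<and>
     (\<forall>m. openin T {g \<in> carrier G. \<rho> g m = m})"

definition pic_class where
  "pic_class G T \<sigma> sc \<rho> =
     (let v = (SOME v. v \<noteq> 0 \<and> (\<forall>m. \<exists>a. m = sc a v))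
      in cls1 G T \<sigma> Kunits (\<lambda>g. SOME c. \<rho> g v = sc c v))"

text \<open>The invertible object (sc, rho) is contained in a G-field extension K(a^(1/n)):
there is a field L (carrier represented inside 'k list), an embedding iota of K, alpha with
alpha^n = a generating L over K, a smooth G-action tau on L by field automorphisms extending
sigma, and an injective K-linear G-equivariant map j from the object into L.\<close>
definition contained_in_root_ext ::
  "'g monoid \<Rightarrow> 'g topology \<Rightarrow> ('g \<Rightarrow> 'k::field \<Rightarrow> 'k) \<Rightarrow> nat \<Rightarrow> 'k \<Rightarrow>
   ('k \<Rightarrow> 'm::ab_group_add \<Rightarrow> 'm) \<Rightarrow> ('g \<Rightarrow> 'm \<Rightarrow> 'm) \<Rightarrow> bool" where
  "contained_in_root_ext G T \<sigma> n a sc \<rho> \<longleftrightarrow>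
    (\<exists>(L :: 'k list ring) \<iota> \<alpha> \<tau> j.
       field L \<and>
       (\<forall>x. \<iota> x \<in> carrier L) \<and>
       (\<forall>x y. \<iota> (x + y) = \<iota> x \<oplus>\<^bsub>L\<^esub> \<iota> y \<and> \<iota> (x * y) = \<iota> x \<otimes>\<^bsub>L\<^esub> \<iota> y) \<and>
       \<iota> 1 = \<one>\<^bsub>L\<^esub> \<and>
       \<alpha> \<in> carrier L \<and> \<alpha> [^]\<^bsub>L\<^esub> n = \<iota> a \<and>
       (\<forall>x\<in>carrier L. \<exists>c. x = (\<Oplus>\<^bsub>L\<^esub>i\<in>{..<n}. \<iota> (c i) \<otimes>\<^bsub>L\<^esub> \<alpha> [^]\<^bsub>L\<^esub> i)) \<and>
       (\<forall>g\<in>carrier G. bij_betw (\<tau> g) (carrier L) (carrier L) \<and>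
          (\<forall>x\<in>carrier L. \<forall>y\<in>carrier L.
             \<tau> g (x \<oplus>\<^bsub>L\<^esub> y) = \<tau> g x \<oplus>\<^bsub>L\<^esub> \<tau> g y \<and> \<tau> g (x \<otimes>\<^bsub>L\<^esub> y) = \<tau> g x \<otimes>\<^bsub>L\<^esub> \<tau> g y) \<and>
          (\<forall>x. \<tau> g (\<iota> x) = \<iota> (\<sigma> g x))) \<and>
       (\<forall>x\<in>carrier L. \<tau> \<one>\<^bsub>G\<^esub> x = x) \<and>
       (\<forall>g\<in>carrier G. \<forall>h\<in>carrier G. \<forall>x\<in>carrier L. \<tau> (g \<otimes>\<^bsub>G\<^esub> h) x = \<tau> g (\<tau> h x)) \<and>
       (\<forall>x\<in>carrier L. openin T {g \<in> carrier G. \<tau> g x = x}) \<and>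
       inj j \<and> (\<forall>m. j m \<in> carrier L) \<and>
       (\<forall>m m'. j (m + m') = j m \<oplus>\<^bsub>L\<^esub> j m') \<and>
       (\<forall>c m. j (sc c m) = \<iota> c \<otimes>\<^bsub>L\<^esub> j m) \<and>
       (\<forall>g\<in>carrier G. \<forall>m. j (\<rho> g m) = \<tau> g (j m)))"

end

theory Submission
  imports Defs "HOL-Computational_Algebra.Polynomial_Factorial"
begin

hide_const (open) Multiset.mult1 Multiset.mult

locale PG =
  fixes G :: "'g monoid" (structure) and T :: "'g topology" and \<sigma> :: "'g \<Rightarrow> 'k::field \<Rightarrow> 'k"
  assumes pg: "perm_group G T" and sm: "smooth_G_field G T \<sigma>"
begin

lemma grp: "group G" using pg unfolding perm_group_def by simp

sublocale group G by (rule grp)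

lemma top: "topspace T = carrier G" using pg unfolding perm_group_def by simp
lemma mult_cont: "continuous_map (prod_topology T T) T (\<lambda>(x, y). x \<otimes> y)"
  using pg unfolding perm_group_def by simp

lemma sig_add: "g \<in> carrier G \<Longrightarrow> \<sigma> g (x + y) = \<sigma> g x + \<sigma> g y"
  using sm unfolding smooth_G_field_def by blast
lemma sig_mult: "g \<in> carrier G \<Longrightarrow> \<sigma> g (x * y) = \<sigma> g x * \<sigma> g y"
  using sm unfolding smooth_G_field_def by blast
lemma sig_bij: "g \<in> carrier G \<Longrightarrow> bij (\<sigma> g)"
  using sm unfolding smooth_G_field_def by blast
lemma sig_one[simp]: "\<sigma> \<one> x = x"
  using sm unfolding smooth_G_field_def by blast
lemma sig_comp: "g \<in> carrier G \<Longrightarrow> h \<in> carrier G \<Longrightarrow> \<sigma> (g \<otimes> h) x = \<sigma> g (\<sigma> h x)"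
  using sm unfolding smooth_G_field_def by blast
lemma stab_open: "openin T {g \<in> carrier G. \<sigma> g x = x}"
  using sm unfolding smooth_G_field_def by blast

lemma sig_inj: "g \<in> carrier G \<Longrightarrow> \<sigma> g x = \<sigma> g y \<longleftrightarrow> x = y"
  using sig_bij[of g] by (simp add: bij_def inj_eq)

lemma sig_0[simp]: "g \<in> carrier G \<Longrightarrow> \<sigma> g 0 = 0"
proof -
  assume g: "g \<in> carrier G"
  have "\<sigma> g 0 + \<sigma> g 0 = \<sigma> g 0 + 0" using sig_add[OF g, of 0 0] by simp
  then show ?thesis by (rule add_left_cancel[THEN iffD1])
qed
lemma sig_eq0[simp]: "g \<in> carrier G \<Longrightarrow> \<sigma> g x = 0 \<longleftrightarrow> x = 0"
  using sig_inj[of g x 0] by simp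
lemma sig_1[simp]: "g \<in> carrier G \<Longrightarrow> \<sigma> g 1 = 1"
proof -
  assume g: "g \<in> carrier G"
  have "\<sigma> g 1 * \<sigma> g 1 = \<sigma> g 1 * 1" using sig_mult[OF g, of 1 1] by simp
  moreover have "\<sigma> g 1 \<noteq> 0" using g by simp
  ultimately show ?thesis by simp
qed
lemma sig_mult'[simp]: "g \<in> carrier G \<Longrightarrow> \<sigma> g (x * y) = \<sigma> g x * \<sigma> g y"
  by (rule sig_mult)
lemma sig_add'[simp]: "g \<in> carrier G \<Longrightarrow> \<sigma> g (x + y) = \<sigma> g x + \<sigma> g y"
  by (rule sig_add)
lemma sig_inverse[simp]: "g \<in> carrier G \<Longrightarrow> \<sigma> g (inverse x) = inverse (\<sigma> g x)"
proof (cases "x = 0")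
  case False
  assume g: "g \<in> carrier G"
  have "\<sigma> g (inverse x) * \<sigma> g x = 1" using sig_mult[OF g, of "inverse x" x] False g by simp
  then show ?thesis using False g by (simp add: field_simps)
qed simp
lemma sig_div[simp]: "g \<in> carrier G \<Longrightarrow> \<sigma> g (x / y) = \<sigma> g x / \<sigma> g y"
  by (simp add: divide_inverse)
lemma sig_pow[simp]: "g \<in> carrier G \<Longrightarrow> \<sigma> g (x ^ k) = \<sigma> g x ^ k"
  by (induction k) auto
lemma sig_uminus[simp]: "g \<in> carrier G \<Longrightarrow> \<sigma> g (- x) = - \<sigma> g x"
  using sig_add[of g x "-x"] by (simp add: eq_neg_iff_add_eq_0 add.commute)
lemma sig_minus[simp]: "g \<in> carrier G \<Longrightarrow> \<sigma> g (x - y) = \<sigma> g x - \<sigma> g y"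
  using sig_add[of g x "-y"] by simp
lemma sig_inv_cancel[simp]: "g \<in> carrier G \<Longrightarrow> \<sigma> (inv g) (\<sigma> g x) = x"
  by (simp add: sig_comp[symmetric])
lemma sig_inv_cancel2[simp]: "g \<in> carrier G \<Longrightarrow> \<sigma> g (\<sigma> (inv g) x) = x"
  by (simp add: sig_comp[symmetric])

lemma translate_cont: "a \<in> carrier G \<Longrightarrow> continuous_map T T (\<lambda>x. a \<otimes> x)"
proof -
  assume a: "a \<in> carrier G"
  have "continuous_map T (prod_topology T T) (\<lambda>x. (a, x))"
    using a top by (intro continuous_map_pairedI) auto
  from continuous_map_compose[OF this mult_cont] show ?thesis by (simp add: o_def)
qed

lemma translate_open: "openin T U \<Longrightarrow> a \<in> carrier G \<Longrightarrow> openin T {x \<in> carrier G. a \<otimes> x \<in> U}"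
proof -
  assume U: "openin T U" and a: "a \<in> carrier G"
  have "openin T {x \<in> topspace T. a \<otimes> x \<in> U}"
    by (rule openin_continuous_map_preimage[OF translate_cont[OF a] U])
  then show ?thesis using top by simp
qed

definition lc :: "('g \<Rightarrow> 'b) \<Rightarrow> bool" where
  "lc f \<longleftrightarrow> (\<forall>g0\<in>carrier G. \<exists>U. openin T U \<and> g0 \<in> U \<and> (\<forall>g\<in>U. f g = f g0))"

lemma lcE:
  assumes "lc f" "g0 \<in> carrier G"
  obtains U where "openin T U" "g0 \<in> U" "\<forall>g\<in>U. f g = f g0"
  using assms unfolding lc_def by meson

lemma lc_fiber_open: "lc f \<Longrightarrow> openin T {g \<in> carrier G. f g = a}"
proof (subst openin_subopen, intro ballI)
  fix x assume lcf: "lc f" and x: "x \<in> {g \<in> carrier G. f g = a}"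
  then obtain U where U: "openin T U" "x \<in> U" "\<forall>g\<in>U. f g = f x" unfolding lc_def by blast
  have "U \<subseteq> carrier G" using openin_subset[OF U(1)] top by simp
  then have "U \<subseteq> {g \<in> carrier G. f g = a}" using U(3) x by auto
  then show "\<exists>U. openin T U \<and> x \<in> U \<and> U \<subseteq> {g \<in> carrier G. f g = a}" using U by blast
qed

lemma cont1_iff: "cont1 G T A f \<longleftrightarrow> (\<forall>g\<in>carrier G. f g \<in> A) \<and> lc f"
proof
  assume c: "cont1 G T A f"
  have "lc f" unfolding lc_def
  proof
    fix g0 assume "g0 \<in> carrier G"
    moreover have "openin T {g \<in> carrier G. f g = f g0}" using c unfolding cont1_def by blast
    ultimately show "\<exists>U. openin T U \<and> g0 \<in> U \<and> (\<forall>g\<in>U. f g = f g0)" by (intro exI[of _ "{g \<in> carrier G. f g = f g0}"]) auto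
  qed
  then show "(\<forall>g\<in>carrier G. f g \<in> A) \<and> lc f" using c unfolding cont1_def by simp
next
  assume "(\<forall>g\<in>carrier G. f g \<in> A) \<and> lc f"
  then show "cont1 G T A f" unfolding cont1_def using lc_fiber_open[of f] by simp
qed

lemma lc_const[simp]: "lc (\<lambda>g. a)"
  unfolding lc_def using top openin_topspace[of T] by auto

lemma lc_comb: "lc f \<Longrightarrow> lc f' \<Longrightarrow> lc (\<lambda>g. F (f g) (f' g))"
  unfolding lc_def
proof
  fix g0 assume a: "\<forall>g0\<in>carrier G. \<exists>U. openin T U \<and> g0 \<in> U \<and> (\<forall>g\<in>U. f g = f g0)"
    and b: "\<forall>g0\<in>carrier G. \<exists>U. openin T U \<and> g0 \<in> U \<and> (\<forall>g\<in>U. f' g = f' g0)"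
    and g0: "g0 \<in> carrier G"
  obtain U where U: "openin T U" "g0 \<in> U" "\<forall>g\<in>U. f g = f g0" using a g0 by blast
  obtain U' where U': "openin T U'" "g0 \<in> U'" "\<forall>g\<in>U'. f' g = f' g0" using b g0 by blast
  show "\<exists>U. openin T U \<and> g0 \<in> U \<and> (\<forall>g\<in>U. F (f g) (f' g) = F (f g0) (f' g0))"
  proof (intro exI[of _ "U \<inter> U'"] conjI ballI)
    show "openin T (U \<inter> U')" using U(1) U'(1) by (rule openin_Int)
    show "g0 \<in> U \<inter> U'" using U(2) U'(2) by blast
    fix g assume "g \<in> U \<inter> U'"
    then have "f g = f g0" "f' g = f' g0" using U(3) U'(3) by blast+
    then show "F (f g) (f' g) = F (f g0) (f' g0)" by simp
  qed
qed

lemma lc_comp: "lc f \<Longrightarrow> lc (\<lambda>g. F (f g))"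
  using lc_comb[of f f "\<lambda>x y. F x"] by simp

lemma lc_sig: "lc (\<lambda>g. \<sigma> g x)"
  unfolding lc_def
proof
  fix g0 assume g0: "g0 \<in> carrier G"
  let ?U = "{y \<in> carrier G. inv g0 \<otimes> y \<in> {g \<in> carrier G. \<sigma> g x = x}}"
  have "openin T ?U" by (rule translate_open[OF stab_open]) (use g0 in simp)
  moreover have "g0 \<in> ?U" using g0 by simp
  moreover have "\<forall>g\<in>?U. \<sigma> g x = \<sigma> g0 x"
  proof
    fix g assume "g \<in> ?U"
    then have g: "g \<in> carrier G" and e: "\<sigma> (inv g0 \<otimes> g) x = x" by auto
    have "g = g0 \<otimes> (inv g0 \<otimes> g)" using g g0 by (simp add: m_assoc[symmetric])
    then have "\<sigma> g x = \<sigma> g0 (\<sigma> (inv g0 \<otimes> g) x)" using g g0 sig_comp[of g0 "inv g0 \<otimes> g" x] by simp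
    then show "\<sigma> g x = \<sigma> g0 x" using e by simp
  qed
  ultimately show "\<exists>U. openin T U \<and> g0 \<in> U \<and> (\<forall>g\<in>U. \<sigma> g x = \<sigma> g0 x)" by blast
qed

definition lc2 :: "('g \<times> 'g \<Rightarrow> 'b) \<Rightarrow> bool" where
  "lc2 f \<longleftrightarrow> (\<forall>g0\<in>carrier G. \<forall>h0\<in>carrier G. \<exists>U V. openin T U \<and> openin T V \<and> g0 \<in> U \<and> h0 \<in> V \<and>
     (\<forall>g\<in>U. \<forall>h\<in>V. f (g, h) = f (g0, h0)))"

lemma lc2_fiber_open: "lc2 f \<Longrightarrow> openin (prod_topology T T) {p \<in> carrier G \<times> carrier G. f p = a}"
proof (subst openin_prod_topology_alt, intro allI impI)
  fix x y assume lcf: "lc2 f" and xy: "(x, y) \<in> {p \<in> carrier G \<times> carrier G. f p = a}"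
  have x: "x \<in> carrier G" "y \<in> carrier G" using xy by auto
  obtain U V where U: "openin T U" "openin T V" "x \<in> U" "y \<in> V" "\<forall>g\<in>U. \<forall>h\<in>V. f (g, h) = f (x, y)"
    using lcf[unfolded lc2_def, rule_format, OF x] by blast
  have "U \<subseteq> carrier G" "V \<subseteq> carrier G" using openin_subset[OF U(1)] openin_subset[OF U(2)] top by simp_all
  then have "U \<times> V \<subseteq> {p \<in> carrier G \<times> carrier G. f p = a}"
  proof (intro subsetI)
    fix p assume p: "p \<in> U \<times> V" and sub: "U \<subseteq> carrier G" "V \<subseteq> carrier G"
    then have "f p = f (x, y)" using U(5) by (cases p) blast
    then show "p \<in> {p \<in> carrier G \<times> carrier G. f p = a}" using p sub xy by blast
  qed
  then show "\<exists>U V. openin T U \<and> openin T V \<and> x \<in> U \<and> y \<in> V \<and> U \<times> V \<subseteq> {p \<in> carrier G \<times> carrier G. f p = a}"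
    using U by blast
qed

lemma lc2_comb: "lc2 f \<Longrightarrow> lc2 f' \<Longrightarrow> lc2 (\<lambda>p. F (f p) (f' p))"
  unfolding lc2_def
proof (intro ballI)
  fix g0 h0 assume a: "\<forall>g0\<in>carrier G. \<forall>h0\<in>carrier G. \<exists>U V. openin T U \<and> openin T V \<and> g0 \<in> U \<and> h0 \<in> V \<and> (\<forall>g\<in>U. \<forall>h\<in>V. f (g, h) = f (g0, h0))"
    and b: "\<forall>g0\<in>carrier G. \<forall>h0\<in>carrier G. \<exists>U V. openin T U \<and> openin T V \<and> g0 \<in> U \<and> h0 \<in> V \<and> (\<forall>g\<in>U. \<forall>h\<in>V. f' (g, h) = f' (g0, h0))"
    and g0: "g0 \<in> carrier G" and h0: "h0 \<in> carrier G"
  obtain U V where U: "openin T U" "openin T V" "g0 \<in> U" "h0 \<in> V" "\<forall>g\<in>U. \<forall>h\<in>V. f (g, h) = f (g0, h0)"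
    using a[rule_format, OF g0 h0] by blast
  obtain U' V' where U': "openin T U'" "openin T V'" "g0 \<in> U'" "h0 \<in> V'" "\<forall>g\<in>U'. \<forall>h\<in>V'. f' (g, h) = f' (g0, h0)"
    using b[rule_format, OF g0 h0] by blast
  show "\<exists>U V. openin T U \<and> openin T V \<and> g0 \<in> U \<and> h0 \<in> V \<and> (\<forall>g\<in>U. \<forall>h\<in>V. F (f (g, h)) (f' (g, h)) = F (f (g0, h0)) (f' (g0, h0)))"
  proof (rule exI[of _ "U \<inter> U'"], rule exI[of _ "V \<inter> V'"], intro conjI ballI)
    show "openin T (U \<inter> U')" using U(1) U'(1) by (rule openin_Int)
    show "openin T (V \<inter> V')" using U(2) U'(2) by (rule openin_Int)
    show "g0 \<in> U \<inter> U'" using U(3) U'(3) by blast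
    show "h0 \<in> V \<inter> V'" using U(4) U'(4) by blast
    fix g h assume "g \<in> U \<inter> U'" "h \<in> V \<inter> V'"
    then have "f (g, h) = f (g0, h0)" "f' (g, h) = f' (g0, h0)" using U(5) U'(5) by blast+
    then show "F (f (g, h)) (f' (g, h)) = F (f (g0, h0)) (f' (g0, h0))" by simp
  qed
qed

lemma lc2_comp: "lc2 f \<Longrightarrow> lc2 (\<lambda>p. F (f p))"
  using lc2_comb[of f f "\<lambda>x y. F x"] by simp

lemma lc2_const: "lc2 (\<lambda>p. a)"
  unfolding lc2_def using top openin_topspace[of T] by auto

lemma lc2_fst: "lc f \<Longrightarrow> lc2 (\<lambda>p. f (fst p))"
  unfolding lc2_def
proof (intro ballI)
  fix g0 h0 assume "lc f" "g0 \<in> carrier G" "h0 \<in> carrier G"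
  then obtain U where U: "openin T U" "g0 \<in> U" "\<forall>g\<in>U. f g = f g0" by (meson lcE)
  show "\<exists>U V. openin T U \<and> openin T V \<and> g0 \<in> U \<and> h0 \<in> V \<and> (\<forall>g\<in>U. \<forall>h\<in>V. f (fst (g, h)) = f (fst (g0, h0)))"
  proof (rule exI[of _ U], rule exI[of _ "carrier G"], intro conjI ballI)
    show "openin T (carrier G)" using top openin_topspace[of T] by simp
    fix g h assume "g \<in> U" then show "f (fst (g, h)) = f (fst (g0, h0))" using U(3) by simp
  qed (use U \<open>h0 \<in> carrier G\<close> in simp_all)
qed

lemma lc2_snd: "lc f \<Longrightarrow> lc2 (\<lambda>p. f (snd p))"
  unfolding lc2_def
proof (intro ballI)
  fix g0 h0 assume "lc f" "g0 \<in> carrier G" "h0 \<in> carrier G"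
  then obtain U where U: "openin T U" "h0 \<in> U" "\<forall>g\<in>U. f g = f h0" by (meson lcE)
  show "\<exists>U V. openin T U \<and> openin T V \<and> g0 \<in> U \<and> h0 \<in> V \<and> (\<forall>g\<in>U. \<forall>h\<in>V. f (snd (g, h)) = f (snd (g0, h0)))"
  proof (rule exI[of _ "carrier G"], rule exI[of _ U], intro conjI ballI)
    show "openin T (carrier G)" using top openin_topspace[of T] by simp
    fix g h assume "h \<in> U" then show "f (snd (g, h)) = f (snd (g0, h0))" using U(3) by simp
  qed (use U \<open>g0 \<in> carrier G\<close> in simp_all)
qed

lemma lc2_mult: "lc f \<Longrightarrow> lc2 (\<lambda>p. f (fst p \<otimes> snd p))"
  unfolding lc2_def
proof (intro ballI)
  fix g0 h0 assume lcf: "lc f" and g0: "g0 \<in> carrier G" and h0: "h0 \<in> carrier G"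
  have op: "openin T {g \<in> carrier G. f g = f (g0 \<otimes> h0)}" by (rule lc_fiber_open[OF lcf])
  have "openin (prod_topology T T) {p \<in> topspace (prod_topology T T). (\<lambda>(x, y). x \<otimes> y) p \<in> {g \<in> carrier G. f g = f (g0 \<otimes> h0)}}"
    by (rule openin_continuous_map_preimage[OF mult_cont op])
  then have "openin (prod_topology T T) {p \<in> carrier G \<times> carrier G. fst p \<otimes> snd p \<in> carrier G \<and> f (fst p \<otimes> snd p) = f (g0 \<otimes> h0)}"
    using top by (simp add: case_prod_beta)
  also have "{p \<in> carrier G \<times> carrier G. fst p \<otimes> snd p \<in> carrier G \<and> f (fst p \<otimes> snd p) = f (g0 \<otimes> h0)}
     = {p \<in> carrier G \<times> carrier G. f (fst p \<otimes> snd p) = f (g0 \<otimes> h0)}" by (auto simp: mem_Times_iff)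
  finally have "openin (prod_topology T T) {p \<in> carrier G \<times> carrier G. f (fst p \<otimes> snd p) = f (g0 \<otimes> h0)}" .
  note alt = this[unfolded openin_prod_topology_alt, rule_format, of g0 h0]
  have mem: "(g0, h0) \<in> {p \<in> carrier G \<times> carrier G. f (fst p \<otimes> snd p) = f (g0 \<otimes> h0)}" using g0 h0 by simp
  obtain U V where UV: "openin T U" "openin T V" "g0 \<in> U" "h0 \<in> V"
     "U \<times> V \<subseteq> {p \<in> carrier G \<times> carrier G. f (fst p \<otimes> snd p) = f (g0 \<otimes> h0)}"
    using alt[OF mem] by blast
  show "\<exists>U V. openin T U \<and> openin T V \<and> g0 \<in> U \<and> h0 \<in> V \<and>
     (\<forall>g\<in>U. \<forall>h\<in>V. f (fst (g, h) \<otimes> snd (g, h)) = f (fst (g0, h0) \<otimes> snd (g0, h0)))"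
  proof (rule exI[of _ U], rule exI[of _ V], intro conjI ballI)
    fix g h assume "g \<in> U" "h \<in> V"
    then have "(g, h) \<in> U \<times> V" by blast
    from subsetD[OF UV(5) this] show "f (fst (g, h) \<otimes> snd (g, h)) = f (fst (g0, h0) \<otimes> snd (g0, h0))" by simp
  qed (use UV in simp_all)
qed

lemma lc2_sig: "lc d \<Longrightarrow> lc2 (\<lambda>p. \<sigma> (fst p) (d (snd p)))"
  unfolding lc2_def
proof (intro ballI)
  fix g0 h0 assume lcd: "lc d" and g0: "g0 \<in> carrier G" and h0: "h0 \<in> carrier G"
  obtain V where V: "openin T V" "h0 \<in> V" "\<forall>h\<in>V. d h = d h0" using lcd h0 by (rule lcE)
  obtain U where U: "openin T U" "g0 \<in> U" "\<forall>g\<in>U. \<sigma> g (d h0) = \<sigma> g0 (d h0)"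
    using lc_sig[of "d h0"] g0 by (rule lcE)
  show "\<exists>U V. openin T U \<and> openin T V \<and> g0 \<in> U \<and> h0 \<in> V \<and>
     (\<forall>g\<in>U. \<forall>h\<in>V. \<sigma> (fst (g, h)) (d (snd (g, h))) = \<sigma> (fst (g0, h0)) (d (snd (g0, h0))))"
  proof (rule exI[of _ U], rule exI[of _ V], intro conjI ballI)
    fix g h assume "g \<in> U" "h \<in> V"
    then have e1: "d h = d h0" and e2: "\<sigma> g (d h0) = \<sigma> g0 (d h0)" using U(3) V(3) by blast+
    show "\<sigma> (fst (g, h)) (d (snd (g, h))) = \<sigma> (fst (g0, h0)) (d (snd (g0, h0)))" using e1 e2 by simp
  qed (use U(1,2) V(1,2) in simp_all)
qed

lemma cont2_iff: "cont2 G T A f \<longleftrightarrow> (\<forall>g\<in>carrier G. \<forall>h\<in>carrier G. f (g, h) \<in> A) \<and> lc2 f"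
proof
  assume c: "cont2 G T A f"
  have "lc2 f" unfolding lc2_def
  proof (intro ballI)
    fix g0 h0 assume g0: "g0 \<in> carrier G" and h0: "h0 \<in> carrier G"
    have "openin (prod_topology T T) {p \<in> carrier G \<times> carrier G. f p = f (g0, h0)}"
      using c unfolding cont2_def by blast
    note alt = this[unfolded openin_prod_topology_alt, rule_format, of g0 h0]
    have mem: "(g0, h0) \<in> {p \<in> carrier G \<times> carrier G. f p = f (g0, h0)}" using g0 h0 by simp
    obtain U V where UV: "openin T U" "openin T V" "g0 \<in> U" "h0 \<in> V"
       "U \<times> V \<subseteq> {p \<in> carrier G \<times> carrier G. f p = f (g0, h0)}"
      using alt[OF mem] by blast
    show "\<exists>U V. openin T U \<and> openin T V \<and> g0 \<in> U \<and> h0 \<in> V \<and> (\<forall>g\<in>U. \<forall>h\<in>V. f (g, h) = f (g0, h0))"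
    proof (rule exI[of _ U], rule exI[of _ V], intro conjI ballI)
      fix g h assume "g \<in> U" "h \<in> V"
      then have "(g, h) \<in> U \<times> V" by blast
      from subsetD[OF UV(5) this] show "f (g, h) = f (g0, h0)" by simp
    qed (use UV in simp_all)
  qed
  then show "(\<forall>g\<in>carrier G. \<forall>h\<in>carrier G. f (g, h) \<in> A) \<and> lc2 f" using c unfolding cont2_def by simp
next
  assume "(\<forall>g\<in>carrier G. \<forall>h\<in>carrier G. f (g, h) \<in> A) \<and> lc2 f"
  then show "cont2 G T A f" unfolding cont2_def using lc2_fiber_open[of f] by simp
qed

end

context PG
begin

definition subA :: "'k set \<Rightarrow> bool" where
  "subA A \<longleftrightarrow> 1 \<in> A \<and> 0 \<notin> A \<and> (\<forall>x\<in>A. \<forall>y\<in>A. x * y \<in> A) \<and> (\<forall>x\<in>A. inverse x \<in> A) \<and>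
     (\<forall>g\<in>carrier G. \<forall>x\<in>A. \<sigma> g x \<in> A)"

lemma subA_K: "subA Kunits"
  unfolding subA_def Kunits_def by auto

lemma subA_mu: "subA (mu n)"
  unfolding subA_def mu_def by (auto simp: power_mult_distrib power_inverse sig_pow[symmetric])

lemma mu_sub_K: "mu n \<subseteq> Kunits"
  unfolding mu_def Kunits_def by auto

lemma lc_cong: "lc f \<Longrightarrow> (\<And>g. g \<in> carrier G \<Longrightarrow> f' g = f g) \<Longrightarrow> lc f'"
  unfolding lc_def
proof
  fix g0 assume a: "\<forall>g0\<in>carrier G. \<exists>U. openin T U \<and> g0 \<in> U \<and> (\<forall>g\<in>U. f g = f g0)"
    and e: "\<And>g. g \<in> carrier G \<Longrightarrow> f' g = f g" and g0: "g0 \<in> carrier G"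
  obtain U where U: "openin T U" "g0 \<in> U" "\<forall>g\<in>U. f g = f g0" using a[rule_format, OF g0] by blast
  have sub: "U \<subseteq> carrier G" using openin_subset[OF U(1)] top by simp
  show "\<exists>U. openin T U \<and> g0 \<in> U \<and> (\<forall>g\<in>U. f' g = f' g0)"
  proof (rule exI[of _ U], intro conjI ballI)
    fix g assume g: "g \<in> U"
    have "f g = f g0" using U(3) g by blast
    then show "f' g = f' g0" using e[of g] e[of g0] g sub g0 by auto
  qed (use U(1,2) in simp_all)
qed

context
  fixes A assumes sA: "subA A"
begin

lemma A1: "1 \<in> A" using sA unfolding subA_def by blast
lemma A0: "x \<in> A \<Longrightarrow> x \<noteq> 0" using sA unfolding subA_def by blast
lemma Amult: "x \<in> A \<Longrightarrow> y \<in> A \<Longrightarrow> x * y \<in> A" using sA unfolding subA_def by blast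
lemma Ainv: "x \<in> A \<Longrightarrow> inverse x \<in> A" using sA unfolding subA_def by blast
lemma Asig: "g \<in> carrier G \<Longrightarrow> x \<in> A \<Longrightarrow> \<sigma> g x \<in> A" using sA unfolding subA_def by blast
lemma Adiv: "x \<in> A \<Longrightarrow> y \<in> A \<Longrightarrow> x / y \<in> A" by (simp add: divide_inverse Amult Ainv)
lemma Apow: "x \<in> A \<Longrightarrow> x ^ k \<in> A" by (induction k) (auto simp: A1 Amult)

lemma Z1_iff: "c \<in> Z1 G T \<sigma> A \<longleftrightarrow> (\<forall>g\<in>carrier G. c g \<in> A) \<and> lc c \<and>
   (\<forall>g\<in>carrier G. \<forall>h\<in>carrier G. c (g \<otimes> h) = c g * \<sigma> g (c h))"
  unfolding Z1_def cont1_iff by simp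

lemma Z1_A: "c \<in> Z1 G T \<sigma> A \<Longrightarrow> g \<in> carrier G \<Longrightarrow> c g \<in> A" using Z1_iff by blast
lemma Z1_nz: "c \<in> Z1 G T \<sigma> A \<Longrightarrow> g \<in> carrier G \<Longrightarrow> c g \<noteq> 0" using Z1_A A0 by blast
lemma Z1_lc: "c \<in> Z1 G T \<sigma> A \<Longrightarrow> lc c" using Z1_iff by blast
lemma Z1_coc: "c \<in> Z1 G T \<sigma> A \<Longrightarrow> g \<in> carrier G \<Longrightarrow> h \<in> carrier G \<Longrightarrow> c (g \<otimes> h) = c g * \<sigma> g (c h)"
  using Z1_iff by blast

lemma Z1_mult: "c \<in> Z1 G T \<sigma> A \<Longrightarrow> c' \<in> Z1 G T \<sigma> A \<Longrightarrow> (\<lambda>g. c g * c' g) \<in> Z1 G T \<sigma> A"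
  unfolding Z1_iff by (auto simp: Amult lc_comb)

lemma Z1_one: "(\<lambda>g. 1) \<in> Z1 G T \<sigma> A"
  unfolding Z1_iff by (auto simp: A1)

lemma Z1_pow: "c \<in> Z1 G T \<sigma> A \<Longrightarrow> (\<lambda>g. c g ^ k) \<in> Z1 G T \<sigma> A"
  by (induction k) (auto simp: Z1_one Z1_mult)

lemma Z1_inverse: "c \<in> Z1 G T \<sigma> A \<Longrightarrow> (\<lambda>g. inverse (c g)) \<in> Z1 G T \<sigma> A"
  unfolding Z1_iff by (auto simp: Ainv lc_comp)

lemma Z1_cob: "a \<in> A \<Longrightarrow> (\<lambda>g. \<sigma> g a / a) \<in> Z1 G T \<sigma> A"
  unfolding Z1_iff
proof (intro conjI ballI)
  assume a: "a \<in> A"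
  show "lc (\<lambda>g. \<sigma> g a / a)" by (rule lc_comp[OF lc_sig])
  fix g assume g: "g \<in> carrier G"
  show "\<sigma> g a / a \<in> A" using g a by (simp add: Adiv Asig)
  fix h assume h: "h \<in> carrier G"
  have "a \<noteq> 0" using a A0 by blast
  then show "\<sigma> (g \<otimes> h) a / a = \<sigma> g a / a * \<sigma> g (\<sigma> h a / a)"
    using g h by (simp add: sig_comp)
qed

lemma Z1_cong: "c \<in> Z1 G T \<sigma> A \<Longrightarrow> (\<And>g. g \<in> carrier G \<Longrightarrow> c' g = c g) \<Longrightarrow> c' \<in> Z1 G T \<sigma> A"
  unfolding Z1_iff using lc_cong[of c c'] by auto

definition rel1 where "rel1 c f \<longleftrightarrow> (\<exists>a\<in>A. \<forall>g\<in>carrier G. f g = c g * (\<sigma> g a / a))"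

lemma cls1_alt: "cls1 G T \<sigma> A c = {f \<in> Z1 G T \<sigma> A. rel1 c f}"
  unfolding cls1_def rel1_def by simp

lemma rel1_refl: "rel1 c c"
  unfolding rel1_def using A1 by (intro bexI[of _ 1]) auto

lemma rel1_sym: "c \<in> Z1 G T \<sigma> A \<Longrightarrow> rel1 c f \<Longrightarrow> rel1 f c"
  unfolding rel1_def
proof (elim bexE)
  fix a assume a: "a \<in> A" and e: "\<forall>g\<in>carrier G. f g = c g * (\<sigma> g a / a)"
  have "a \<noteq> 0" using a A0 by blast
  show "\<exists>a\<in>A. \<forall>g\<in>carrier G. c g = f g * (\<sigma> g a / a)"
  proof (rule bexI[of _ "inverse a"], intro ballI)
    fix g assume g: "g \<in> carrier G"
    have "\<sigma> g a \<noteq> 0" using g \<open>a \<noteq> 0\<close> by simp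
    then show "c g = f g * (\<sigma> g (inverse a) / inverse a)" using e g \<open>a \<noteq> 0\<close> by (simp add: field_simps)
  qed (use a Ainv in simp)
qed

lemma rel1_trans: "rel1 c f \<Longrightarrow> rel1 f f' \<Longrightarrow> rel1 c f'"
  unfolding rel1_def
proof (elim bexE)
  fix a b assume a: "a \<in> A" and e: "\<forall>g\<in>carrier G. f g = c g * (\<sigma> g a / a)"
    and b: "b \<in> A" and e': "\<forall>g\<in>carrier G. f' g = f g * (\<sigma> g b / b)"
  have "a \<noteq> 0" "b \<noteq> 0" using a b A0 by blast+
  show "\<exists>a\<in>A. \<forall>g\<in>carrier G. f' g = c g * (\<sigma> g a / a)"
  proof (rule bexI[of _ "a * b"], intro ballI)
    fix g assume g: "g \<in> carrier G"
    show "f' g = c g * (\<sigma> g (a * b) / (a * b))" using e[rule_format, OF g] e'[rule_format, OF g] g by simp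
  qed (use a b Amult in simp)
qed

lemma cls1_self: "c \<in> Z1 G T \<sigma> A \<Longrightarrow> c \<in> cls1 G T \<sigma> A c"
  unfolding cls1_alt using rel1_refl by simp

lemma cls1_eq: "c \<in> Z1 G T \<sigma> A \<Longrightarrow> c' \<in> Z1 G T \<sigma> A \<Longrightarrow> rel1 c c' \<Longrightarrow> cls1 G T \<sigma> A c = cls1 G T \<sigma> A c'"
  unfolding cls1_alt using rel1_sym rel1_trans by blast

lemma cls1_eq_iff: "c \<in> Z1 G T \<sigma> A \<Longrightarrow> c' \<in> Z1 G T \<sigma> A \<Longrightarrow> cls1 G T \<sigma> A c = cls1 G T \<sigma> A c' \<longleftrightarrow> rel1 c c'"
proof
  assume c: "c \<in> Z1 G T \<sigma> A" and c': "c' \<in> Z1 G T \<sigma> A" and e: "cls1 G T \<sigma> A c = cls1 G T \<sigma> A c'"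
  have "c' \<in> cls1 G T \<sigma> A c" using e cls1_self[OF c'] by simp
  then show "rel1 c c'" unfolding cls1_alt by simp
qed (rule cls1_eq)

lemma cls1_mem: "f \<in> cls1 G T \<sigma> A c \<Longrightarrow> c \<in> Z1 G T \<sigma> A \<Longrightarrow> f \<in> Z1 G T \<sigma> A \<and> rel1 c f \<and> cls1 G T \<sigma> A f = cls1 G T \<sigma> A c"
  unfolding cls1_alt using cls1_eq[of c f] by (auto simp: cls1_alt)

lemma pick_in: "x \<in> X \<Longrightarrow> pick X \<in> X"
  unfolding pick_def by (rule someI)

lemma H1_pick: "X \<in> H1 G T \<sigma> A \<Longrightarrow> pick X \<in> Z1 G T \<sigma> A \<and> pick X \<in> X \<and> X = cls1 G T \<sigma> A (pick X)"
proof -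
  assume "X \<in> H1 G T \<sigma> A"
  then obtain c where c: "c \<in> Z1 G T \<sigma> A" and X: "X = cls1 G T \<sigma> A c" unfolding H1_def by blast
  have "c \<in> X" using cls1_self[OF c] X by simp
  then have p: "pick X \<in> X" by (rule pick_in)
  then have "pick X \<in> cls1 G T \<sigma> A c" using X by simp
  from cls1_mem[OF this c] have "pick X \<in> Z1 G T \<sigma> A" "cls1 G T \<sigma> A (pick X) = cls1 G T \<sigma> A c" by simp_all
  then show ?thesis using p X by simp
qed

lemma rel1_cong: "rel1 c f \<Longrightarrow> (\<And>g. g \<in> carrier G \<Longrightarrow> c' g = c g) \<Longrightarrow> (\<And>g. g \<in> carrier G \<Longrightarrow> f' g = f g) \<Longrightarrow> rel1 c' f'"
  unfolding rel1_def by auto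

lemma rel1_mult: "rel1 c f \<Longrightarrow> rel1 c' f' \<Longrightarrow> rel1 (\<lambda>g. c g * c' g) (\<lambda>g. f g * f' g)"
  unfolding rel1_def
proof (elim bexE)
  fix a b assume a: "a \<in> A" and e: "\<forall>g\<in>carrier G. f g = c g * (\<sigma> g a / a)"
    and b: "b \<in> A" and e': "\<forall>g\<in>carrier G. f' g = c' g * (\<sigma> g b / b)"
  show "\<exists>a\<in>A. \<forall>g\<in>carrier G. f g * f' g = c g * c' g * (\<sigma> g a / a)"
  proof (rule bexI[of _ "a * b"], intro ballI)
    fix g assume g: "g \<in> carrier G"
    show "f g * f' g = c g * c' g * (\<sigma> g (a * b) / (a * b))" using e[rule_format, OF g] e'[rule_format, OF g] g by simp
  qed (use a b Amult in simp)
qed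

lemma rel1_pow: "rel1 c f \<Longrightarrow> rel1 (\<lambda>g. c g ^ k) (\<lambda>g. f g ^ k)"
proof (induction k)
  case 0 then show ?case using rel1_refl by simp
next
  case (Suc k)
  then show ?case using rel1_mult[OF Suc.prems Suc.IH[OF Suc.prems]] by simp
qed

lemma rel1_iff_cob: "rel1 c f \<longleftrightarrow> (\<exists>a\<in>A. \<forall>g\<in>carrier G. f g = c g * (\<sigma> g a / a))"
  unfolding rel1_def by simp

end

definition del :: "('g \<Rightarrow> 'k) \<Rightarrow> 'g \<times> 'g \<Rightarrow> 'k" where
  "del d p = d (fst p) * \<sigma> (fst p) (d (snd p)) / d (fst p \<otimes> snd p)"

lemma del_simp: "del d (g, h) = d g * \<sigma> g (d h) / d (g \<otimes> h)"
  unfolding del_def by simp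

lemma lc2_del: "lc d \<Longrightarrow> lc2 (del d)"
proof -
  assume d: "lc d"
  have l1: "lc2 (\<lambda>p. d (fst p))" by (rule lc2_fst[OF d])
  have l2: "lc2 (\<lambda>p. \<sigma> (fst p) (d (snd p)))" by (rule lc2_sig[OF d])
  have l3: "lc2 (\<lambda>p. d (fst p \<otimes> snd p))" by (rule lc2_mult[OF d])
  have l4: "lc2 (\<lambda>p. d (fst p) * \<sigma> (fst p) (d (snd p)))" using lc2_comb[OF l1 l2, of "\<lambda>x y. x * y"] by simp
  have "lc2 (\<lambda>p. d (fst p) * \<sigma> (fst p) (d (snd p)) / d (fst p \<otimes> snd p))" using lc2_comb[OF l4 l3, of "\<lambda>x y. x / y"] by simp
  then show ?thesis unfolding del_def by simp
qed

lemma del_cong: "(\<And>g. g \<in> carrier G \<Longrightarrow> d' g = d g) \<Longrightarrow> g \<in> carrier G \<Longrightarrow> h \<in> carrier G \<Longrightarrow> del d' (g, h) = del d (g, h)"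
  unfolding del_def by simp

lemma del_mult: "g \<in> carrier G \<Longrightarrow> h \<in> carrier G \<Longrightarrow> del (\<lambda>x. d x * d' x) (g, h) = del d (g, h) * del d' (g, h)"
  unfolding del_def by simp

lemma del_inverse: "g \<in> carrier G \<Longrightarrow> h \<in> carrier G \<Longrightarrow> del (\<lambda>x. inverse (d x)) (g, h) = inverse (del d (g, h))"
  unfolding del_def by (simp add: field_simps)

lemma del_cob: "e \<noteq> 0 \<Longrightarrow> g \<in> carrier G \<Longrightarrow> h \<in> carrier G \<Longrightarrow> del (\<lambda>x. \<sigma> x e / e) (g, h) = 1"
  unfolding del_def by (simp add: sig_comp)

lemma del_one: "g \<in> carrier G \<Longrightarrow> del (\<lambda>x. 1) (g, h) = 1"
  unfolding del_def by (simp add: sig_1)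

context
  fixes A assumes sA: "subA A"
begin

lemma Z2_iff: "c \<in> Z2 G T \<sigma> A \<longleftrightarrow> (\<forall>g\<in>carrier G. \<forall>h\<in>carrier G. c (g, h) \<in> A) \<and> lc2 c \<and>
   (\<forall>g\<in>carrier G. \<forall>h\<in>carrier G. \<forall>l\<in>carrier G.
        \<sigma> g (c (h, l)) * c (g, h \<otimes> l) = c (g \<otimes> h, l) * c (g, h))"
  unfolding Z2_def cont2_iff by simp

lemma del_coc: "d \<in> Z1 G T \<sigma> A \<Longrightarrow> g \<in> carrier G \<Longrightarrow> h \<in> carrier G \<Longrightarrow> del d (g, h) = 1"
  unfolding del_def using Z1_coc[OF sA, of d g h] Z1_nz[OF sA, of d "g \<otimes> h"] by simp

lemma Z2_del: "(\<And>g. g \<in> carrier G \<Longrightarrow> d g \<in> A) \<Longrightarrow> lc d \<Longrightarrow> del d \<in> Z2 G T \<sigma> A"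
  unfolding Z2_iff
proof (intro conjI ballI)
  assume dA: "\<And>g. g \<in> carrier G \<Longrightarrow> d g \<in> A" and lcd: "lc d"
  show "lc2 (del d)" by (rule lc2_del[OF lcd])
  fix g h assume g: "g \<in> carrier G" and h: "h \<in> carrier G"
  show "del d (g, h) \<in> A" unfolding del_simp using g h dA
    by (simp add: Adiv[OF sA] Amult[OF sA] Asig[OF sA])
  fix l assume l: "l \<in> carrier G"
  have nz: "\<And>x. x \<in> carrier G \<Longrightarrow> d x \<noteq> 0" using dA A0[OF sA] by blast
  have n1: "d (h \<otimes> l) \<noteq> 0" "d (g \<otimes> h) \<noteq> 0" "d (g \<otimes> h \<otimes> l) \<noteq> 0" "\<sigma> g (d (h \<otimes> l)) \<noteq> 0"
    using nz g h l by simp_all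
  have ass: "g \<otimes> (h \<otimes> l) = g \<otimes> h \<otimes> l" using g h l by (simp add: m_assoc)
  show "\<sigma> g (del d (h, l)) * del d (g, h \<otimes> l) = del d (g \<otimes> h, l) * del d (g, h)"
    unfolding del_simp using n1 g h l ass by (simp add: sig_comp field_simps)
qed

lemma Z2_one: "(\<lambda>p. 1) \<in> Z2 G T \<sigma> A"
  unfolding Z2_iff by (auto simp: A1[OF sA] lc2_const)

lemma Z2_mult: "c \<in> Z2 G T \<sigma> A \<Longrightarrow> c' \<in> Z2 G T \<sigma> A \<Longrightarrow> (\<lambda>p. c p * c' p) \<in> Z2 G T \<sigma> A"
  unfolding Z2_iff
proof (intro conjI ballI, goal_cases)
  case (1 g h) then show ?case by (simp add: Amult[OF sA])
next
  case 2 then show ?case using lc2_comb[of c c' "\<lambda>x y. x * y"] by simp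
next
  case (3 g h l)
  then have a: "\<sigma> g (c (h, l)) * c (g, h \<otimes> l) = c (g \<otimes> h, l) * c (g, h)"
   and b: "\<sigma> g (c' (h, l)) * c' (g, h \<otimes> l) = c' (g \<otimes> h, l) * c' (g, h)" by blast+
  have "\<sigma> g (c (h, l) * c' (h, l)) * (c (g, h \<otimes> l) * c' (g, h \<otimes> l)) =
     (\<sigma> g (c (h, l)) * c (g, h \<otimes> l)) * (\<sigma> g (c' (h, l)) * c' (g, h \<otimes> l))"
    using 3 by (simp add: ac_simps)
  also have "\<dots> = (c (g \<otimes> h, l) * c (g, h)) * (c' (g \<otimes> h, l) * c' (g, h))" using a b by simp
  finally show ?case by (simp add: ac_simps)
qed

definition rel2 where "rel2 c f \<longleftrightarrow> (\<exists>d. cont1 G T A d \<and> (\<forall>g\<in>carrier G. \<forall>h\<in>carrier G. f (g, h) = c (g, h) * del d (g, h)))"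

lemma cls2_alt: "cls2 G T \<sigma> A c = {f \<in> Z2 G T \<sigma> A. rel2 c f}"
  unfolding cls2_def rel2_def del_simp by simp

lemma cont1_A: "cont1 G T A d \<longleftrightarrow> (\<forall>g\<in>carrier G. d g \<in> A) \<and> lc d"
  by (rule cont1_iff)

lemma rel2_refl: "rel2 c c"
  unfolding rel2_def
  by (rule exI[of _ "\<lambda>x. 1"]) (simp add: cont1_A A1[OF sA] del_one)

lemma rel2_sym: "rel2 c f \<Longrightarrow> rel2 f c"
  unfolding rel2_def
proof (elim exE conjE)
  fix d assume d: "cont1 G T A d" and e: "\<forall>g\<in>carrier G. \<forall>h\<in>carrier G. f (g, h) = c (g, h) * del d (g, h)"
  have dA: "\<And>g. g \<in> carrier G \<Longrightarrow> d g \<in> A" and lcd: "lc d" using d unfolding cont1_A by auto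
  show "\<exists>d. cont1 G T A d \<and> (\<forall>g\<in>carrier G. \<forall>h\<in>carrier G. c (g, h) = f (g, h) * del d (g, h))"
  proof (rule exI[of _ "\<lambda>x. inverse (d x)"], intro conjI ballI)
    show "cont1 G T A (\<lambda>x. inverse (d x))" unfolding cont1_A using dA lc_comp[OF lcd, of inverse] by (auto simp: Ainv[OF sA])
    fix g h assume g: "g \<in> carrier G" and h: "h \<in> carrier G"
    have "del d (g, h) \<in> A" unfolding del_simp using g h dA
      by (simp add: Adiv[OF sA] Amult[OF sA] Asig[OF sA])
    then have "del d (g, h) \<noteq> 0" using A0[OF sA] by blast
    then show "c (g, h) = f (g, h) * del (\<lambda>x. inverse (d x)) (g, h)"
      using e g h by (simp add: del_inverse)
  qed
qed

lemma rel2_trans: "rel2 c f \<Longrightarrow> rel2 f f' \<Longrightarrow> rel2 c f'"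
  unfolding rel2_def
proof (elim exE conjE)
  fix d d' assume d: "cont1 G T A d" and e: "\<forall>g\<in>carrier G. \<forall>h\<in>carrier G. f (g, h) = c (g, h) * del d (g, h)"
    and d': "cont1 G T A d'" and e': "\<forall>g\<in>carrier G. \<forall>h\<in>carrier G. f' (g, h) = f (g, h) * del d' (g, h)"
  show "\<exists>d. cont1 G T A d \<and> (\<forall>g\<in>carrier G. \<forall>h\<in>carrier G. f' (g, h) = c (g, h) * del d (g, h))"
  proof (rule exI[of _ "\<lambda>x. d x * d' x"], intro conjI ballI)
    show "cont1 G T A (\<lambda>x. d x * d' x)" using d d' lc_comb[of d d' "\<lambda>x y. x * y"] unfolding cont1_A by (auto simp: Amult[OF sA])
    fix g h assume g: "g \<in> carrier G" and h: "h \<in> carrier G"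
    show "f' (g, h) = c (g, h) * del (\<lambda>x. d x * d' x) (g, h)"
      using e[rule_format, OF g h] e'[rule_format, OF g h] g h by (simp add: del_mult)
  qed
qed

lemma rel2_mult: "rel2 c f \<Longrightarrow> rel2 c' f' \<Longrightarrow> rel2 (\<lambda>p. c p * c' p) (\<lambda>p. f p * f' p)"
  unfolding rel2_def
proof (elim exE conjE)
  fix d d' assume d: "cont1 G T A d" and e: "\<forall>g\<in>carrier G. \<forall>h\<in>carrier G. f (g, h) = c (g, h) * del d (g, h)"
    and d': "cont1 G T A d'" and e': "\<forall>g\<in>carrier G. \<forall>h\<in>carrier G. f' (g, h) = c' (g, h) * del d' (g, h)"
  show "\<exists>d. cont1 G T A d \<and> (\<forall>g\<in>carrier G. \<forall>h\<in>carrier G. f (g, h) * f' (g, h) = c (g, h) * c' (g, h) * del d (g, h))"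
  proof (rule exI[of _ "\<lambda>x. d x * d' x"], intro conjI ballI)
    show "cont1 G T A (\<lambda>x. d x * d' x)" using d d' lc_comb[of d d' "\<lambda>x y. x * y"] unfolding cont1_A by (auto simp: Amult[OF sA])
    fix g h assume g: "g \<in> carrier G" and h: "h \<in> carrier G"
    show "f (g, h) * f' (g, h) = c (g, h) * c' (g, h) * del (\<lambda>x. d x * d' x) (g, h)"
      using e[rule_format, OF g h] e'[rule_format, OF g h] g h by (simp add: del_mult ac_simps)
  qed
qed

lemma cls2_self: "c \<in> Z2 G T \<sigma> A \<Longrightarrow> c \<in> cls2 G T \<sigma> A c"
  unfolding cls2_alt using rel2_refl by simp

lemma cls2_eq: "rel2 c c' \<Longrightarrow> cls2 G T \<sigma> A c = cls2 G T \<sigma> A c'"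
  unfolding cls2_alt using rel2_sym rel2_trans by blast

lemma cls2_eq_iff: "c' \<in> Z2 G T \<sigma> A \<Longrightarrow> cls2 G T \<sigma> A c = cls2 G T \<sigma> A c' \<longleftrightarrow> rel2 c c'"
proof
  assume c': "c' \<in> Z2 G T \<sigma> A" and e: "cls2 G T \<sigma> A c = cls2 G T \<sigma> A c'"
  have "c' \<in> cls2 G T \<sigma> A c" using e cls2_self[OF c'] by simp
  then show "rel2 c c'" unfolding cls2_alt by simp
qed (rule cls2_eq)

lemma cls2_mem: "f \<in> cls2 G T \<sigma> A c \<Longrightarrow> f \<in> Z2 G T \<sigma> A \<and> rel2 c f \<and> cls2 G T \<sigma> A f = cls2 G T \<sigma> A c"
proof -
  assume f: "f \<in> cls2 G T \<sigma> A c"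
  then have "f \<in> Z2 G T \<sigma> A" "rel2 c f" unfolding cls2_alt by auto
  then show ?thesis using cls2_eq[of c f] by simp
qed

lemma H2_pick: "X \<in> H2 G T \<sigma> A \<Longrightarrow> pick X \<in> Z2 G T \<sigma> A \<and> pick X \<in> X \<and> X = cls2 G T \<sigma> A (pick X)"
proof -
  assume "X \<in> H2 G T \<sigma> A"
  then obtain c where c: "c \<in> Z2 G T \<sigma> A" and X: "X = cls2 G T \<sigma> A c" unfolding H2_def by blast
  have "c \<in> X" using cls2_self[OF c] X by simp
  then have p: "pick X \<in> X" by (rule pick_in[OF sA])
  then have "pick X \<in> cls2 G T \<sigma> A c" using X by simp
  from cls2_mem[OF this] have "pick X \<in> Z2 G T \<sigma> A" "cls2 G T \<sigma> A (pick X) = cls2 G T \<sigma> A c" by simp_all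
  then show ?thesis using p X by simp
qed

lemma rel2_cong: "rel2 c f \<Longrightarrow> (\<And>g h. g \<in> carrier G \<Longrightarrow> h \<in> carrier G \<Longrightarrow> c' (g, h) = c (g, h)) \<Longrightarrow>
   (\<And>g h. g \<in> carrier G \<Longrightarrow> h \<in> carrier G \<Longrightarrow> f' (g, h) = f (g, h)) \<Longrightarrow> rel2 c' f'"
  unfolding rel2_def by auto

end

lemma Z1_mono: "A \<subseteq> B \<Longrightarrow> c \<in> Z1 G T \<sigma> A \<Longrightarrow> c \<in> Z1 G T \<sigma> B"
  unfolding Z1_def cont1_def by auto

end

context PG
begin

lemma fixed_iff: "z \<in> fixed_field G \<sigma> \<longleftrightarrow> (\<forall>g\<in>carrier G. \<sigma> g z = z)"
  unfolding fixed_field_def by simp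

definition relM where
  "relM n a a' \<longleftrightarrow> (\<exists>z e. z \<in> fixed_field G \<sigma> \<and> z \<noteq> 0 \<and> e \<noteq> 0 \<and> a' = a * z * e ^ n)"

lemma Mcls_alt: "Mcls G \<sigma> n a = {a'. Ginv_mod G \<sigma> n a' \<and> relM n a a'}"
  unfolding Mcls_def relM_def by simp

lemma relM_refl: "relM n a a"
  unfolding relM_def by (rule exI[of _ 1], rule exI[of _ 1]) (simp add: fixed_iff)

lemma relM_sym: "a \<noteq> 0 \<Longrightarrow> relM n a a' \<Longrightarrow> relM n a' a"
  unfolding relM_def
proof (elim exE conjE)
  fix z e assume a: "a \<noteq> 0" and z: "z \<in> fixed_field G \<sigma>" "z \<noteq> 0" and e: "e \<noteq> 0" and a': "a' = a * z * e ^ n"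
  show "\<exists>z e. z \<in> fixed_field G \<sigma> \<and> z \<noteq> 0 \<and> e \<noteq> 0 \<and> a = a' * z * e ^ n"
    using z e a' by (intro exI[of _ "inverse z"] exI[of _ "inverse e"]) (auto simp: fixed_iff field_simps power_inverse)
qed

lemma relM_trans: "relM n a a' \<Longrightarrow> relM n a' a'' \<Longrightarrow> relM n a a''"
  unfolding relM_def
proof (elim exE conjE)
  fix z e z' e' assume z: "z \<in> fixed_field G \<sigma>" "z \<noteq> 0" and e: "e \<noteq> 0" and a': "a' = a * z * e ^ n"
    and z': "z' \<in> fixed_field G \<sigma>" "z' \<noteq> 0" and e': "e' \<noteq> 0" and a'': "a'' = a' * z' * e' ^ n"
  show "\<exists>z e. z \<in> fixed_field G \<sigma> \<and> z \<noteq> 0 \<and> e \<noteq> 0 \<and> a'' = a * z * e ^ n"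
    using z e z' e' a' a'' by (intro exI[of _ "z * z'"] exI[of _ "e * e'"]) (auto simp: fixed_iff power_mult_distrib)
qed

lemma relM_mult: "relM n a a' \<Longrightarrow> relM n b b' \<Longrightarrow> relM n (a * b) (a' * b')"
  unfolding relM_def
proof (elim exE conjE)
  fix z e z' e' assume z: "z \<in> fixed_field G \<sigma>" "z \<noteq> 0" and e: "e \<noteq> 0" and a': "a' = a * z * e ^ n"
    and z': "z' \<in> fixed_field G \<sigma>" "z' \<noteq> 0" and e': "e' \<noteq> 0" and a'': "b' = b * z' * e' ^ n"
  show "\<exists>z e. z \<in> fixed_field G \<sigma> \<and> z \<noteq> 0 \<and> e \<noteq> 0 \<and> a' * b' = a * b * z * e ^ n"
    using z e z' e' a' a'' by (intro exI[of _ "z * z'"] exI[of _ "e * e'"]) (auto simp: fixed_iff power_mult_distrib)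
qed

lemma Ginv_iff: "Ginv_mod G \<sigma> n a \<longleftrightarrow> a \<noteq> 0 \<and> (\<forall>g\<in>carrier G. \<exists>e. e \<noteq> 0 \<and> \<sigma> g a = a * e ^ n)"
  unfolding Ginv_mod_def by simp

lemma Ginv_relM: "Ginv_mod G \<sigma> n a \<Longrightarrow> relM n a a' \<Longrightarrow> Ginv_mod G \<sigma> n a'"
  unfolding relM_def Ginv_iff
proof (elim exE conjE, intro conjI ballI)
  fix z e assume a: "a \<noteq> 0" and ga: "\<forall>g\<in>carrier G. \<exists>e. e \<noteq> 0 \<and> \<sigma> g a = a * e ^ n"
    and z: "z \<in> fixed_field G \<sigma>" "z \<noteq> 0" and e: "e \<noteq> 0" and a': "a' = a * z * e ^ n"
  show "a' \<noteq> 0" using a z e a' by simp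
  fix g assume g: "g \<in> carrier G"
  obtain f where f: "f \<noteq> 0" "\<sigma> g a = a * f ^ n" using ga g by blast
  show "\<exists>e. e \<noteq> 0 \<and> \<sigma> g a' = a' * e ^ n"
    using f z e a' g by (intro exI[of _ "f * \<sigma> g e / e"]) (auto simp: fixed_iff power_mult_distrib power_divide field_simps)
qed

lemma Ginv_mult: "Ginv_mod G \<sigma> n a \<Longrightarrow> Ginv_mod G \<sigma> n b \<Longrightarrow> Ginv_mod G \<sigma> n (a * b)"
  unfolding Ginv_iff
proof (elim conjE, intro conjI ballI)
  assume a: "a \<noteq> 0" and ga: "\<forall>g\<in>carrier G. \<exists>e. e \<noteq> 0 \<and> \<sigma> g a = a * e ^ n"
    and b: "b \<noteq> 0" and gb: "\<forall>g\<in>carrier G. \<exists>e. e \<noteq> 0 \<and> \<sigma> g b = b * e ^ n"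
  show "a * b \<noteq> 0" using a b by simp
  fix g assume g: "g \<in> carrier G"
  obtain f where f: "f \<noteq> 0" "\<sigma> g a = a * f ^ n" using ga g by blast
  obtain f' where f': "f' \<noteq> 0" "\<sigma> g b = b * f' ^ n" using gb g by blast
  show "\<exists>e. e \<noteq> 0 \<and> \<sigma> g (a * b) = a * b * e ^ n"
    using f f' g by (intro exI[of _ "f * f'"]) (auto simp: power_mult_distrib)
qed

lemma Mcls_self: "Ginv_mod G \<sigma> n a \<Longrightarrow> a \<in> Mcls G \<sigma> n a"
  unfolding Mcls_alt using relM_refl by simp

lemma Ginv_nz: "Ginv_mod G \<sigma> n a \<Longrightarrow> a \<noteq> 0" unfolding Ginv_iff by simp

lemma Mcls_eq: "Ginv_mod G \<sigma> n a \<Longrightarrow> relM n a a' \<Longrightarrow> Mcls G \<sigma> n a = Mcls G \<sigma> n a'"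
proof -
  assume a: "Ginv_mod G \<sigma> n a" and r: "relM n a a'"
  have a': "Ginv_mod G \<sigma> n a'" by (rule Ginv_relM[OF a r])
  have r': "relM n a' a" by (rule relM_sym[OF Ginv_nz[OF a] r])
  show ?thesis unfolding Mcls_alt using relM_trans[OF r] relM_trans[OF r'] by blast
qed

lemma Mcls_eq_iff: "Ginv_mod G \<sigma> n a \<Longrightarrow> Ginv_mod G \<sigma> n a' \<Longrightarrow> Mcls G \<sigma> n a = Mcls G \<sigma> n a' \<longleftrightarrow> relM n a a'"
proof
  assume a: "Ginv_mod G \<sigma> n a" and a': "Ginv_mod G \<sigma> n a'" and e: "Mcls G \<sigma> n a = Mcls G \<sigma> n a'"
  have "a' \<in> Mcls G \<sigma> n a" using e Mcls_self[OF a'] by simp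
  then show "relM n a a'" unfolding Mcls_alt by simp
next
  assume a: "Ginv_mod G \<sigma> n a" and "relM n a a'"
  then show "Mcls G \<sigma> n a = Mcls G \<sigma> n a'" by (rule Mcls_eq)
qed

lemma pick_in': "x \<in> X \<Longrightarrow> pick X \<in> X"
  unfolding pick_def by (rule someI)

lemma Mgrp_pick: "Y \<in> Mgrp G \<sigma> n \<Longrightarrow> Ginv_mod G \<sigma> n (pick Y) \<and> pick Y \<in> Y \<and> Y = Mcls G \<sigma> n (pick Y)"
proof -
  assume "Y \<in> Mgrp G \<sigma> n"
  then obtain a where a: "Ginv_mod G \<sigma> n a" and Y: "Y = Mcls G \<sigma> n a" unfolding Mgrp_def by blast
  have "a \<in> Y" using Mcls_self[OF a] Y by simp
  then have p: "pick Y \<in> Y" by (rule pick_in')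
  then have g: "Ginv_mod G \<sigma> n (pick Y)" and r: "relM n a (pick Y)" using Y unfolding Mcls_alt by auto
  have "Mcls G \<sigma> n a = Mcls G \<sigma> n (pick Y)" by (rule Mcls_eq[OF a r])
  then have "Y = Mcls G \<sigma> n (pick Y)" by (rule trans[OF Y])
  then show ?thesis using g p by blast
qed

lemma Mgrp_I: "Ginv_mod G \<sigma> n a \<Longrightarrow> Mcls G \<sigma> n a \<in> Mgrp G \<sigma> n"
  unfolding Mgrp_def by blast

lemma cob_fixed:
  assumes b: "b \<noteq> 0" and b': "b' \<noteq> 0" and e: "\<And>g. g \<in> carrier G \<Longrightarrow> \<sigma> g b / b = \<sigma> g b' / b'"
  shows "relM n b b'"
  unfolding relM_def
proof (rule exI[of _ "b' / b"], rule exI[of _ 1], intro conjI)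
  show "b' / b \<in> fixed_field G \<sigma>" unfolding fixed_iff
  proof
    fix g assume g: "g \<in> carrier G"
    have "\<sigma> g b \<noteq> 0" "\<sigma> g b' \<noteq> 0" using g b b' by simp_all
    then show "\<sigma> g (b' / b) = b' / b" using e[OF g] g b b' by (simp add: field_simps)
  qed
qed (use b b' in simp_all)

lemma Z2_restrict: "c \<in> Z2 G T \<sigma> A \<Longrightarrow> (\<And>g h. g \<in> carrier G \<Longrightarrow> h \<in> carrier G \<Longrightarrow> c (g, h) \<in> B) \<Longrightarrow> c \<in> Z2 G T \<sigma> B"
  unfolding Z2_def cont2_def by auto

lemma rel1_mono: "rel1 (mu n) c f \<Longrightarrow> rel1 Kunits c f"
  unfolding rel1_def[OF subA_mu] rel1_def[OF subA_K] using mu_sub_K by blast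

lemma Kunits_iff[simp]: "x \<in> Kunits \<longleftrightarrow> x \<noteq> 0" unfolding Kunits_def by simp
lemma mu_iff: "x \<in> mu n \<longleftrightarrow> x \<noteq> 0 \<and> x ^ n = 1" unfolding mu_def by simp

lemma nPic_iff:
  assumes X: "X \<in> Pic G T \<sigma>"
  shows "X \<in> nPic G T \<sigma> n \<longleftrightarrow> (\<exists>b. b \<noteq> 0 \<and> (\<forall>g\<in>carrier G. pick X g ^ n = \<sigma> g b / b))"
proof -
  have hp: "pick X \<in> Z1 G T \<sigma> Kunits" "X = cls1 G T \<sigma> Kunits (pick X)"
    using H1_pick[OF subA_K, of X] X unfolding Pic_def by auto
  have z1: "(\<lambda>g. pick X g ^ n) \<in> Z1 G T \<sigma> Kunits" by (rule Z1_pow[OF subA_K hp(1)])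
  have z2: "(\<lambda>g. 1) \<in> Z1 G T \<sigma> Kunits" by (rule Z1_one[OF subA_K])
  have "X \<in> nPic G T \<sigma> n \<longleftrightarrow> cls1 G T \<sigma> Kunits (\<lambda>g. pick X g ^ n) = cls1 G T \<sigma> Kunits (\<lambda>g. 1)"
    unfolding nPic_def pic_pow_def pic_one_def using X by simp
  also have "\<dots> \<longleftrightarrow> rel1 Kunits (\<lambda>g. pick X g ^ n) (\<lambda>g. 1)" by (rule cls1_eq_iff[OF subA_K z1 z2])
  also have "\<dots> \<longleftrightarrow> rel1 Kunits (\<lambda>g. 1) (\<lambda>g. pick X g ^ n)"
    using rel1_sym[OF subA_K z1] rel1_sym[OF subA_K z2] by blast
  also have "\<dots> \<longleftrightarrow> (\<exists>b. b \<noteq> 0 \<and> (\<forall>g\<in>carrier G. pick X g ^ n = \<sigma> g b / b))"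
    unfolding rel1_def[OF subA_K] Bex_def Kunits_iff by simp
  finally show ?thesis .
qed

lemma phi2_b:
  assumes X: "X \<in> nPic G T \<sigma> n"
  obtains b where "phi2 G T \<sigma> n X = Mcls G \<sigma> n b" "b \<noteq> 0" "\<forall>g\<in>carrier G. pick X g ^ n = \<sigma> g b / b"
proof -
  have XP: "X \<in> Pic G T \<sigma>" using X unfolding nPic_def by simp
  have ex: "\<exists>b. b \<noteq> 0 \<and> (\<forall>g\<in>carrier G. pick X g ^ n = \<sigma> g b / b)" using nPic_iff[OF XP] X by simp
  let ?b = "SOME b. b \<noteq> 0 \<and> (\<forall>g\<in>carrier G. pick X g ^ n = \<sigma> g b / b)"
  have "?b \<noteq> 0 \<and> (\<forall>g\<in>carrier G. pick X g ^ n = \<sigma> g ?b / ?b)" using someI_ex[OF ex] .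
  moreover have "phi2 G T \<sigma> n X = Mcls G \<sigma> n ?b" unfolding phi2_def by simp
  ultimately show ?thesis using that by blast
qed

lemma b_Ginv:
  assumes c: "c \<in> Z1 G T \<sigma> Kunits" and b: "b \<noteq> 0" and e: "\<forall>g\<in>carrier G. c g ^ n = \<sigma> g b / b"
  shows "Ginv_mod G \<sigma> n b"
  unfolding Ginv_iff
proof (intro conjI ballI)
  fix g assume g: "g \<in> carrier G"
  have "c g \<noteq> 0" using Z1_nz[OF subA_K c g] .
  moreover have "\<sigma> g b = b * c g ^ n" using e g b by simp
  ultimately show "\<exists>e. e \<noteq> 0 \<and> \<sigma> g b = b * e ^ n" by blast
qed (rule b)

lemma b_rel:
  assumes b: "b \<noteq> 0" and b': "b' \<noteq> 0"
    and e: "\<forall>g\<in>carrier G. c g ^ n = \<sigma> g b / b" and e': "\<forall>g\<in>carrier G. c' g ^ n = \<sigma> g b' / b'"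
    and r: "rel1 Kunits c c'"
  shows "relM n b b'"
proof -
  obtain u where u: "u \<noteq> 0" "\<forall>g\<in>carrier G. c' g = c g * (\<sigma> g u / u)" using r unfolding rel1_def[OF subA_K] by auto
  have "relM n b (b * u ^ n)" unfolding relM_def
    by (rule exI[of _ 1], rule exI[of _ u]) (simp add: fixed_iff u)
  moreover have "relM n (b * u ^ n) b'"
  proof (rule cob_fixed)
    show "b * u ^ n \<noteq> 0" using b u by simp
    fix g assume g: "g \<in> carrier G"
    have "\<sigma> g b' / b' = c' g ^ n" using e' g by simp
    also have "\<dots> = c g ^ n * (\<sigma> g u / u) ^ n" using u(2) g by (simp add: power_mult_distrib[symmetric] mult.assoc)
    also have "\<dots> = \<sigma> g (b * u ^ n) / (b * u ^ n)" using e g u b by (simp add: power_divide)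
    finally show "\<sigma> g (b * u ^ n) / (b * u ^ n) = \<sigma> g b' / b'" by simp
  qed (rule b')
  ultimately show ?thesis by (rule relM_trans)
qed

definition Dfun where
  "Dfun n a = (SOME d. cont1 G T Kunits d \<and> (\<forall>g\<in>carrier G. \<sigma> g a = a * d g ^ n))"

lemma D_ex:
  assumes a: "Ginv_mod G \<sigma> n a"
  shows "cont1 G T Kunits (Dfun n a) \<and> (\<forall>g\<in>carrier G. \<sigma> g a = a * Dfun n a g ^ n)"
proof -
  define F where "F y = (SOME e. e \<noteq> 0 \<and> y = a * e ^ n)" for y
  define d where "d g = F (\<sigma> g a)" for g
  have F: "F (\<sigma> g a) \<noteq> 0 \<and> \<sigma> g a = a * F (\<sigma> g a) ^ n" if g: "g \<in> carrier G" for g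
  proof -
    have "\<exists>e. e \<noteq> 0 \<and> \<sigma> g a = a * e ^ n" using a g unfolding Ginv_iff by blast
    from someI_ex[OF this] show ?thesis unfolding F_def .
  qed
  have "lc d" unfolding d_def by (rule lc_comp[OF lc_sig])
  then have "cont1 G T Kunits d \<and> (\<forall>g\<in>carrier G. \<sigma> g a = a * d g ^ n)"
    unfolding cont1_iff d_def using F by simp
  then have "\<exists>d. cont1 G T Kunits d \<and> (\<forall>g\<in>carrier G. \<sigma> g a = a * d g ^ n)" by blast
  from someI_ex[OF this] show ?thesis unfolding Dfun_def .
qed

lemma phi3_eq: "phi3 G T \<sigma> n Y = cls2 G T \<sigma> (mu n) (del (Dfun n (pick Y)))"
proof -
  have "(\<lambda>(g, h). Dfun n (pick Y) g * \<sigma> g (Dfun n (pick Y) h) / Dfun n (pick Y) (g \<otimes> h)) = del (Dfun n (pick Y))"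
    by (rule ext) (simp add: del_def case_prod_beta)
  then show ?thesis unfolding phi3_def Let_def Dfun_def by simp
qed

lemma del_mu:
  assumes d: "cont1 G T Kunits d" and a: "a \<noteq> 0" and e: "\<forall>g\<in>carrier G. \<sigma> g a = a * d g ^ n"
  shows "del d \<in> Z2 G T \<sigma> (mu n)"
proof -
  have dK: "\<And>g. g \<in> carrier G \<Longrightarrow> d g \<noteq> 0" and lcd: "lc d" using d unfolding cont1_iff by auto
  have "del d \<in> Z2 G T \<sigma> Kunits" by (rule Z2_del[OF subA_K]) (use dK lcd in auto)
  moreover have "del d (g, h) \<in> mu n" if g: "g \<in> carrier G" and h: "h \<in> carrier G" for g h
  proof -
    have ne: "del d (g, h) \<noteq> 0" unfolding del_simp using dK g h by simp
    have dn: "\<And>x. x \<in> carrier G \<Longrightarrow> d x ^ n = \<sigma> x a / a" using e a by simp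
    have "del d (g, h) ^ n = d g ^ n * \<sigma> g (d h ^ n) / d (g \<otimes> h) ^ n"
      unfolding del_simp using g h by (simp add: power_mult_distrib power_divide)
    also have "\<dots> = (\<sigma> g a / a) * \<sigma> g (\<sigma> h a / a) / (\<sigma> (g \<otimes> h) a / a)"
      using dn g h by simp
    also have "\<dots> = 1" using g h a by (simp add: sig_comp)
    finally show ?thesis unfolding mu_iff using ne by simp
  qed
  ultimately show ?thesis by (rule Z2_restrict)
qed

lemma D_rel:
  assumes d: "cont1 G T Kunits d" and a: "a \<noteq> 0" and e: "\<forall>g\<in>carrier G. \<sigma> g a = a * d g ^ n"
    and d': "cont1 G T Kunits d'" and a': "a' \<noteq> 0" and e': "\<forall>g\<in>carrier G. \<sigma> g a' = a' * d' g ^ n"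
    and r: "relM n a a'"
  shows "rel2 (mu n) (del d) (del d')"
proof -
  obtain z f where z: "z \<in> fixed_field G \<sigma>" "z \<noteq> 0" and f: "f \<noteq> 0" and aa: "a' = a * z * f ^ n"
    using r unfolding relM_def by blast
  have dK: "\<And>g. g \<in> carrier G \<Longrightarrow> d g \<noteq> 0" and lcd: "lc d" using d unfolding cont1_iff by auto
  have dK': "\<And>g. g \<in> carrier G \<Longrightarrow> d' g \<noteq> 0" and lcd': "lc d'" using d' unfolding cont1_iff by auto
  define eps where "eps g = d' g / (d g * (\<sigma> g f / f))" for g
  have eps_mu: "eps g \<in> mu n" if g: "g \<in> carrier G" for g
  proof -
    have "\<sigma> g z = z" using z g unfolding fixed_iff by simp
    then have h: "d' g ^ n = (d g * (\<sigma> g f / f)) ^ n"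
      using e[rule_format, OF g] e'[rule_format, OF g] a a' aa f z g
      by (simp add: power_mult_distrib power_divide field_simps)
    have nz: "d g * (\<sigma> g f / f) \<noteq> 0" using dK g f by simp
    have "eps g ^ n = 1" unfolding eps_def power_divide h using nz by simp
    moreover have "eps g \<noteq> 0" unfolding eps_def using dK' nz g by simp
    ultimately show ?thesis unfolding mu_iff by simp
  qed
  have "lc (\<lambda>g. d g * (\<sigma> g f / f))" using lc_comb[OF lcd lc_sig, of "\<lambda>x y. x * (y / f)"] by simp
  then have "lc eps" unfolding eps_def using lc_comb[OF lcd', of "\<lambda>g. d g * (\<sigma> g f / f)" "\<lambda>x y. x / y"] by simp
  then have ce: "cont1 G T (mu n) eps" unfolding cont1_iff using eps_mu by simp
  show ?thesis unfolding rel2_def[OF subA_mu]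
  proof (rule exI[of _ eps], intro conjI ballI)
    fix g h assume g: "g \<in> carrier G" and h: "h \<in> carrier G"
    have dd: "d' x = d x * (\<sigma> x f / f) * eps x" if "x \<in> carrier G" for x
      unfolding eps_def using dK that f by simp
    have "del d' (g, h) = del (\<lambda>x. d x * (\<sigma> x f / f) * eps x) (g, h)" by (rule del_cong[OF dd g h])
    also have "\<dots> = del (\<lambda>x. d x * (\<sigma> x f / f)) (g, h) * del eps (g, h)" by (rule del_mult[OF g h])
    also have "\<dots> = del d (g, h) * del (\<lambda>x. \<sigma> x f / f) (g, h) * del eps (g, h)"
      by (subst del_mult[OF g h]) (rule refl)
    also have "\<dots> = del d (g, h) * del eps (g, h)" using del_cob[OF f g h] by simp
    finally show "del d' (g, h) = del d (g, h) * del eps (g, h)" .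
  qed (rule ce)
qed

end


context PG
begin

lemma Z1_restrict: "c \<in> Z1 G T \<sigma> A \<Longrightarrow> (\<And>g. g \<in> carrier G \<Longrightarrow> c g \<in> B) \<Longrightarrow> c \<in> Z1 G T \<sigma> B"
  unfolding Z1_def cont1_def by auto

lemma cls1_pick_rel:
  assumes sA: "subA A" and c: "c \<in> Z1 G T \<sigma> A"
  shows "pick (cls1 G T \<sigma> A c) \<in> Z1 G T \<sigma> A \<and> rel1 A c (pick (cls1 G T \<sigma> A c))"
proof -
  have "pick (cls1 G T \<sigma> A c) \<in> cls1 G T \<sigma> A c" by (rule pick_in'[OF cls1_self[OF sA c]])
  from cls1_mem[OF sA this c] show ?thesis by simp
qed

lemma cls2_pick_rel:
  assumes sA: "subA A" and c: "c \<in> Z2 G T \<sigma> A"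
  shows "pick (cls2 G T \<sigma> A c) \<in> Z2 G T \<sigma> A \<and> rel2 A c (pick (cls2 G T \<sigma> A c))"
proof -
  have "pick (cls2 G T \<sigma> A c) \<in> cls2 G T \<sigma> A c" by (rule pick_in'[OF cls2_self[OF sA c]])
  from cls2_mem[OF sA this] show ?thesis by simp
qed

lemma Pic_Z1: "X \<in> Pic G T \<sigma> \<Longrightarrow> pick X \<in> Z1 G T \<sigma> Kunits \<and> X = cls1 G T \<sigma> Kunits (pick X)"
  unfolding Pic_def using H1_pick[OF subA_K] by blast

lemma Pic_I: "c \<in> Z1 G T \<sigma> Kunits \<Longrightarrow> cls1 G T \<sigma> Kunits c \<in> Pic G T \<sigma>"
  unfolding Pic_def H1_def by blast

lemma phi2_gen:
  assumes ex: "\<exists>b. b \<noteq> 0 \<and> (\<forall>g\<in>carrier G. pick X g ^ n = \<sigma> g b / b)"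
  obtains b where "phi2 G T \<sigma> n X = Mcls G \<sigma> n b" "b \<noteq> 0" "\<forall>g\<in>carrier G. pick X g ^ n = \<sigma> g b / b"
proof -
  let ?b = "SOME b. b \<noteq> 0 \<and> (\<forall>g\<in>carrier G. pick X g ^ n = \<sigma> g b / b)"
  have "?b \<noteq> 0 \<and> (\<forall>g\<in>carrier G. pick X g ^ n = \<sigma> g ?b / ?b)" using someI_ex[OF ex] .
  moreover have "phi2 G T \<sigma> n X = Mcls G \<sigma> n ?b" unfolding phi2_def by simp
  ultimately show ?thesis using that by blast
qed

lemma rel1_pow_cob:
  assumes r: "rel1 Kunits c c'" and b: "b \<noteq> 0" and e: "\<forall>g\<in>carrier G. c g ^ n = \<sigma> g b / b"
  shows "\<exists>b. b \<noteq> 0 \<and> (\<forall>g\<in>carrier G. c' g ^ n = \<sigma> g b / b)"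
proof -
  obtain u where u: "u \<noteq> 0" "\<forall>g\<in>carrier G. c' g = c g * (\<sigma> g u / u)" using r unfolding rel1_def[OF subA_K] by auto
  have "\<forall>g\<in>carrier G. c' g ^ n = \<sigma> g (b * u ^ n) / (b * u ^ n)"
  proof
    fix g assume g: "g \<in> carrier G"
    have "c' g ^ n = c g ^ n * (\<sigma> g u / u) ^ n" using u(2) g by (simp add: power_mult_distrib[symmetric] mult.assoc)
    also have "\<dots> = \<sigma> g (b * u ^ n) / (b * u ^ n)" using e g u b by (simp add: power_divide)
    finally show "c' g ^ n = \<sigma> g (b * u ^ n) / (b * u ^ n)" .
  qed
  then show ?thesis using b u by (intro exI[of _ "b * u ^ n"]) simp
qed

lemma C1: "X \<in> H1 G T \<sigma> (mu n) \<Longrightarrow> phi1 G T \<sigma> X \<in> nPic G T \<sigma> n"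
proof -
  assume X: "X \<in> H1 G T \<sigma> (mu n)"
  have zm: "pick X \<in> Z1 G T \<sigma> (mu n)" using H1_pick[OF subA_mu X] by simp
  have zk: "pick X \<in> Z1 G T \<sigma> Kunits" by (rule Z1_mono[OF mu_sub_K zm])
  have P: "phi1 G T \<sigma> X \<in> Pic G T \<sigma>" unfolding phi1_def by (rule Pic_I[OF zk])
  have r: "rel1 Kunits (pick X) (pick (phi1 G T \<sigma> X))" unfolding phi1_def using cls1_pick_rel[OF subA_K zk] by simp
  have e: "\<forall>g\<in>carrier G. pick X g ^ n = \<sigma> g 1 / 1" using Z1_A[OF subA_mu zm] by (simp add: mu_iff)
  show ?thesis using nPic_iff[OF P] rel1_pow_cob[OF r _ e] by simp
qed

lemma C2: "X \<in> nPic G T \<sigma> n \<Longrightarrow> phi2 G T \<sigma> n X \<in> Mgrp G \<sigma> n"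
proof -
  assume X: "X \<in> nPic G T \<sigma> n"
  have XP: "X \<in> Pic G T \<sigma>" using X unfolding nPic_def by simp
  obtain b where b: "phi2 G T \<sigma> n X = Mcls G \<sigma> n b" "b \<noteq> 0" "\<forall>g\<in>carrier G. pick X g ^ n = \<sigma> g b / b"
    by (rule phi2_b[OF X])
  have "Ginv_mod G \<sigma> n b" by (rule b_Ginv[OF conjunct1[OF Pic_Z1[OF XP]] b(2,3)])
  then show ?thesis using b(1) Mgrp_I by simp
qed

lemma C3: "Y \<in> Mgrp G \<sigma> n \<Longrightarrow> phi3 G T \<sigma> n Y \<in> H2 G T \<sigma> (mu n)"
proof -
  assume Y: "Y \<in> Mgrp G \<sigma> n"
  have a: "Ginv_mod G \<sigma> n (pick Y)" using Mgrp_pick[OF Y] by simp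
  have D: "cont1 G T Kunits (Dfun n (pick Y))" "\<forall>g\<in>carrier G. \<sigma> g (pick Y) = pick Y * Dfun n (pick Y) g ^ n"
    using D_ex[OF a] by auto
  have "del (Dfun n (pick Y)) \<in> Z2 G T \<sigma> (mu n)" by (rule del_mu[OF D(1) Ginv_nz[OF a] D(2)])
  then show ?thesis unfolding phi3_eq H2_def by blast
qed

lemma C4:
  assumes X: "X \<in> H1 G T \<sigma> (mu n)" and Y: "Y \<in> H1 G T \<sigma> (mu n)"
  shows "phi1 G T \<sigma> (mult1 G T \<sigma> (mu n) X Y) = mult1 G T \<sigma> Kunits (phi1 G T \<sigma> X) (phi1 G T \<sigma> Y)"
proof -
  let ?x = "pick X" and ?y = "pick Y"
  have xm: "?x \<in> Z1 G T \<sigma> (mu n)" using H1_pick[OF subA_mu X] by simp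
  have ym: "?y \<in> Z1 G T \<sigma> (mu n)" using H1_pick[OF subA_mu Y] by simp
  have xk: "?x \<in> Z1 G T \<sigma> Kunits" by (rule Z1_mono[OF mu_sub_K xm])
  have yk: "?y \<in> Z1 G T \<sigma> Kunits" by (rule Z1_mono[OF mu_sub_K ym])
  let ?xy = "\<lambda>g. ?x g * ?y g"
  have xym: "?xy \<in> Z1 G T \<sigma> (mu n)" by (rule Z1_mult[OF subA_mu xm ym])
  have xyk: "?xy \<in> Z1 G T \<sigma> Kunits" by (rule Z1_mult[OF subA_K xk yk])
  let ?W = "cls1 G T \<sigma> (mu n) ?xy"
  have w: "pick ?W \<in> Z1 G T \<sigma> (mu n)" "rel1 (mu n) ?xy (pick ?W)" using cls1_pick_rel[OF subA_mu xym] by auto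
  have wk: "pick ?W \<in> Z1 G T \<sigma> Kunits" by (rule Z1_mono[OF mu_sub_K w(1)])
  have L: "phi1 G T \<sigma> (mult1 G T \<sigma> (mu n) X Y) = cls1 G T \<sigma> Kunits ?xy"
    unfolding phi1_def Defs.mult1_def
    using cls1_eq[OF subA_K xyk wk rel1_mono[OF w(2)]] by simp
  have px: "pick (cls1 G T \<sigma> Kunits ?x) \<in> Z1 G T \<sigma> Kunits" "rel1 Kunits ?x (pick (cls1 G T \<sigma> Kunits ?x))"
    using cls1_pick_rel[OF subA_K xk] by auto
  have py: "pick (cls1 G T \<sigma> Kunits ?y) \<in> Z1 G T \<sigma> Kunits" "rel1 Kunits ?y (pick (cls1 G T \<sigma> Kunits ?y))"
    using cls1_pick_rel[OF subA_K yk] by auto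
  have r: "rel1 Kunits ?xy (\<lambda>g. pick (cls1 G T \<sigma> Kunits ?x) g * pick (cls1 G T \<sigma> Kunits ?y) g)"
    by (rule rel1_mult[OF subA_K px(2) py(2)])
  have R: "mult1 G T \<sigma> Kunits (phi1 G T \<sigma> X) (phi1 G T \<sigma> Y) =
     cls1 G T \<sigma> Kunits (\<lambda>g. pick (cls1 G T \<sigma> Kunits ?x) g * pick (cls1 G T \<sigma> Kunits ?y) g)"
    unfolding Defs.mult1_def phi1_def by simp
  show ?thesis unfolding L R by (rule cls1_eq[OF subA_K xyk Z1_mult[OF subA_K px(1) py(1)] r])
qed

lemma Mgrp_pick_rel: "Ginv_mod G \<sigma> n b \<Longrightarrow> Ginv_mod G \<sigma> n (pick (Mcls G \<sigma> n b)) \<and> relM n b (pick (Mcls G \<sigma> n b))"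
proof -
  assume b: "Ginv_mod G \<sigma> n b"
  have "pick (Mcls G \<sigma> n b) \<in> Mcls G \<sigma> n b" by (rule pick_in'[OF Mcls_self[OF b]])
  then show ?thesis unfolding Mcls_alt by simp
qed

lemma C5:
  assumes X: "X \<in> nPic G T \<sigma> n" and Y: "Y \<in> nPic G T \<sigma> n"
  shows "phi2 G T \<sigma> n (mult1 G T \<sigma> Kunits X Y) = Mmult G \<sigma> n (phi2 G T \<sigma> n X) (phi2 G T \<sigma> n Y)"
proof -
  have XP: "X \<in> Pic G T \<sigma>" and YP: "Y \<in> Pic G T \<sigma>" using X Y unfolding nPic_def by auto
  have xk: "pick X \<in> Z1 G T \<sigma> Kunits" using Pic_Z1[OF XP] by simp
  have yk: "pick Y \<in> Z1 G T \<sigma> Kunits" using Pic_Z1[OF YP] by simp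
  obtain bx where bx: "phi2 G T \<sigma> n X = Mcls G \<sigma> n bx" "bx \<noteq> 0" "\<forall>g\<in>carrier G. pick X g ^ n = \<sigma> g bx / bx"
    by (rule phi2_b[OF X])
  obtain by' where by': "phi2 G T \<sigma> n Y = Mcls G \<sigma> n by'" "by' \<noteq> 0" "\<forall>g\<in>carrier G. pick Y g ^ n = \<sigma> g by' / by'"
    by (rule phi2_b[OF Y])
  have gx: "Ginv_mod G \<sigma> n bx" by (rule b_Ginv[OF xk bx(2,3)])
  have gy: "Ginv_mod G \<sigma> n by'" by (rule b_Ginv[OF yk by'(2,3)])
  let ?xy = "\<lambda>g. pick X g * pick Y g"
  have xyk: "?xy \<in> Z1 G T \<sigma> Kunits" by (rule Z1_mult[OF subA_K xk yk])
  have exy: "\<forall>g\<in>carrier G. ?xy g ^ n = \<sigma> g (bx * by') / (bx * by')"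
    using bx(3) by'(3) by (simp add: power_mult_distrib)
  let ?Z = "mult1 G T \<sigma> Kunits X Y"
  have Zc: "?Z = cls1 G T \<sigma> Kunits ?xy" unfolding Defs.mult1_def by simp
  have rz: "rel1 Kunits ?xy (pick ?Z)" using cls1_pick_rel[OF subA_K xyk] Zc by simp
  have ex: "\<exists>b. b \<noteq> 0 \<and> (\<forall>g\<in>carrier G. pick ?Z g ^ n = \<sigma> g b / b)"
    by (rule rel1_pow_cob[OF rz _ exy]) (use bx(2) by'(2) in simp)
  obtain bz where bz: "phi2 G T \<sigma> n ?Z = Mcls G \<sigma> n bz" "bz \<noteq> 0" "\<forall>g\<in>carrier G. pick ?Z g ^ n = \<sigma> g bz / bz"
    by (rule phi2_gen[OF ex])
  have r1: "relM n (bx * by') bz" by (rule b_rel[OF _ bz(2) exy bz(3) rz]) (use bx(2) by'(2) in simp)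
  have gxy: "Ginv_mod G \<sigma> n (bx * by')" by (rule Ginv_mult[OF gx gy])
  have L: "phi2 G T \<sigma> n ?Z = Mcls G \<sigma> n (bx * by')" using bz(1) Mcls_eq[OF gxy r1] by simp
  have px: "relM n bx (pick (Mcls G \<sigma> n bx))" using Mgrp_pick_rel[OF gx] by simp
  have py: "relM n by' (pick (Mcls G \<sigma> n by'))" using Mgrp_pick_rel[OF gy] by simp
  have R: "Mmult G \<sigma> n (phi2 G T \<sigma> n X) (phi2 G T \<sigma> n Y) = Mcls G \<sigma> n (pick (Mcls G \<sigma> n bx) * pick (Mcls G \<sigma> n by'))"
    unfolding Mmult_def bx(1) by'(1) by simp
  show ?thesis unfolding L R by (rule Mcls_eq[OF gxy relM_mult[OF px py]])
qed

lemma D_props: "Ginv_mod G \<sigma> n a \<Longrightarrow> cont1 G T Kunits (Dfun n a) \<and> (\<forall>g\<in>carrier G. \<sigma> g a = a * Dfun n a g ^ n) \<and> del (Dfun n a) \<in> Z2 G T \<sigma> (mu n)"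
  using D_ex del_mu Ginv_nz by blast

lemma C6:
  assumes X: "X \<in> Mgrp G \<sigma> n" and Y: "Y \<in> Mgrp G \<sigma> n"
  shows "phi3 G T \<sigma> n (Mmult G \<sigma> n X Y) = mult2 G T \<sigma> (mu n) (phi3 G T \<sigma> n X) (phi3 G T \<sigma> n Y)"
proof -
  let ?a = "pick X" and ?b = "pick Y"
  have ga: "Ginv_mod G \<sigma> n ?a" using Mgrp_pick[OF X] by simp
  have gb: "Ginv_mod G \<sigma> n ?b" using Mgrp_pick[OF Y] by simp
  have gab: "Ginv_mod G \<sigma> n (?a * ?b)" by (rule Ginv_mult[OF ga gb])
  let ?w = "pick (Mcls G \<sigma> n (?a * ?b))"
  have w: "Ginv_mod G \<sigma> n ?w" "relM n (?a * ?b) ?w" using Mgrp_pick_rel[OF gab] by auto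
  note Da = D_props[OF ga] and Db = D_props[OF gb] and Dw = D_props[OF w(1)]
  let ?Da = "Dfun n ?a" and ?Db = "Dfun n ?b" and ?Dw = "Dfun n ?w"
  have cab: "cont1 G T Kunits (\<lambda>g. ?Da g * ?Db g)"
    using Da Db lc_comb[of ?Da ?Db "\<lambda>x y. x * y"] unfolding cont1_iff by auto
  have eab: "\<forall>g\<in>carrier G. \<sigma> g (?a * ?b) = ?a * ?b * (?Da g * ?Db g) ^ n"
    using Da Db by (simp add: power_mult_distrib)
  have r0: "rel2 (mu n) (del (\<lambda>g. ?Da g * ?Db g)) (del ?Dw)"
    by (rule D_rel[OF cab _ eab _ _ _ w(2)]) (use Ginv_nz[OF gab] Ginv_nz[OF w(1)] Dw in auto)
  have r1: "rel2 (mu n) (\<lambda>p. del ?Da p * del ?Db p) (del ?Dw)"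
    by (rule rel2_cong[OF subA_mu r0]) (simp_all add: del_mult)
  have L: "phi3 G T \<sigma> n (Mmult G \<sigma> n X Y) = cls2 G T \<sigma> (mu n) (\<lambda>p. del ?Da p * del ?Db p)"
    unfolding Mmult_def phi3_eq using cls2_eq[OF subA_mu r1] by simp
  have pa: "rel2 (mu n) (del ?Da) (pick (phi3 G T \<sigma> n X))" unfolding phi3_eq using cls2_pick_rel[OF subA_mu] Da by blast
  have pb: "rel2 (mu n) (del ?Db) (pick (phi3 G T \<sigma> n Y))" unfolding phi3_eq using cls2_pick_rel[OF subA_mu] Db by blast
  have R: "mult2 G T \<sigma> (mu n) (phi3 G T \<sigma> n X) (phi3 G T \<sigma> n Y) =
      cls2 G T \<sigma> (mu n) (\<lambda>p. pick (phi3 G T \<sigma> n X) p * pick (phi3 G T \<sigma> n Y) p)"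
    unfolding mult2_def by simp
  show ?thesis unfolding L R by (rule cls2_eq[OF subA_mu rel2_mult[OF subA_mu pa pb]])
qed

lemma Ginv_one: "Ginv_mod G \<sigma> n 1"
  unfolding Ginv_iff by (auto intro: exI[of _ 1])

lemma C7: "phi1 G T \<sigma> ` H1 G T \<sigma> (mu n) = {X \<in> nPic G T \<sigma> n. phi2 G T \<sigma> n X = Mcls G \<sigma> n 1}"
proof (intro equalityI subsetI)
  fix X assume "X \<in> phi1 G T \<sigma> ` H1 G T \<sigma> (mu n)"
  then obtain X' where X': "X' \<in> H1 G T \<sigma> (mu n)" and XX: "X = phi1 G T \<sigma> X'" by blast
  have XN: "X \<in> nPic G T \<sigma> n" using C1[OF X'] XX by simp
  have zm: "pick X' \<in> Z1 G T \<sigma> (mu n)" using H1_pick[OF subA_mu X'] by simp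
  have zk: "pick X' \<in> Z1 G T \<sigma> Kunits" by (rule Z1_mono[OF mu_sub_K zm])
  have r: "rel1 Kunits (pick X') (pick X)" unfolding XX phi1_def using cls1_pick_rel[OF subA_K zk] by simp
  have e: "\<forall>g\<in>carrier G. pick X' g ^ n = \<sigma> g 1 / 1" using Z1_A[OF subA_mu zm] by (simp add: mu_iff)
  obtain b where b: "phi2 G T \<sigma> n X = Mcls G \<sigma> n b" "b \<noteq> 0" "\<forall>g\<in>carrier G. pick X g ^ n = \<sigma> g b / b"
    by (rule phi2_b[OF XN])
  have "relM n 1 b" by (rule b_rel[OF _ b(2) e b(3) r]) simp
  then have "Mcls G \<sigma> n 1 = Mcls G \<sigma> n b" by (rule Mcls_eq[OF Ginv_one])
  then show "X \<in> {X \<in> nPic G T \<sigma> n. phi2 G T \<sigma> n X = Mcls G \<sigma> n 1}" using XN b(1) by simp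
next
  fix X assume "X \<in> {X \<in> nPic G T \<sigma> n. phi2 G T \<sigma> n X = Mcls G \<sigma> n 1}"
  then have XN: "X \<in> nPic G T \<sigma> n" and X1: "phi2 G T \<sigma> n X = Mcls G \<sigma> n 1" by auto
  have XP: "X \<in> Pic G T \<sigma>" using XN unfolding nPic_def by simp
  have ck: "pick X \<in> Z1 G T \<sigma> Kunits" and Xc: "X = cls1 G T \<sigma> Kunits (pick X)" using Pic_Z1[OF XP] by auto
  obtain b where b: "phi2 G T \<sigma> n X = Mcls G \<sigma> n b" "b \<noteq> 0" "\<forall>g\<in>carrier G. pick X g ^ n = \<sigma> g b / b"
    by (rule phi2_b[OF XN])
  have gb: "Ginv_mod G \<sigma> n b" by (rule b_Ginv[OF ck b(2,3)])
  have "Mcls G \<sigma> n b = Mcls G \<sigma> n 1" using b(1) X1 by simp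
  then have "relM n b 1" using Mcls_eq_iff[OF gb Ginv_one] by simp
  then have "relM n 1 b" by (rule relM_sym[OF b(2)])
  then obtain z e where z: "z \<in> fixed_field G \<sigma>" "z \<noteq> 0" and e: "e \<noteq> 0" and bz: "b = z * e ^ n"
    unfolding relM_def by auto
  define c' where "c' g = pick X g * (\<sigma> g (inverse e) / inverse e)" for g
  have c'k: "c' \<in> Z1 G T \<sigma> Kunits" unfolding c'_def
    by (rule Z1_mult[OF subA_K ck Z1_cob[OF subA_K]]) (use e in simp)
  have c'mu: "c' g \<in> mu n" if g: "g \<in> carrier G" for g
  proof -
    have sz: "\<sigma> g z = z" using z g unfolding fixed_iff by simp
    have "c' g ^ n = pick X g ^ n * (e / \<sigma> g e) ^ n" unfolding c'_def using g e
      by (simp add: power_mult_distrib field_simps)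
    also have "\<dots> = 1" using b(3) g bz sz e z by (simp add: power_divide power_mult_distrib)
    finally show ?thesis unfolding mu_iff using Z1_nz[OF subA_K c'k g] by simp
  qed
  have c'm: "c' \<in> Z1 G T \<sigma> (mu n)" by (rule Z1_restrict[OF c'k c'mu])
  let ?X' = "cls1 G T \<sigma> (mu n) c'"
  have X'H: "?X' \<in> H1 G T \<sigma> (mu n)" unfolding H1_def using c'm by blast
  have p': "pick ?X' \<in> Z1 G T \<sigma> Kunits" "rel1 Kunits c' (pick ?X')"
    using cls1_pick_rel[OF subA_mu c'm] Z1_mono[OF mu_sub_K] rel1_mono by blast+
  have rc: "rel1 Kunits (pick X) c'" unfolding rel1_def[OF subA_K] c'_def using e by (intro bexI[of _ "inverse e"]) auto
  have "phi1 G T \<sigma> ?X' = cls1 G T \<sigma> Kunits (pick ?X')" unfolding phi1_def by simp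
  also have "\<dots> = cls1 G T \<sigma> Kunits c'" using cls1_eq[OF subA_K c'k p'(1) p'(2)] by simp
  also have "\<dots> = cls1 G T \<sigma> Kunits (pick X)" using cls1_eq[OF subA_K ck c'k rc] by simp
  also have "\<dots> = X" using Xc by simp
  finally show "X \<in> phi1 G T \<sigma> ` H1 G T \<sigma> (mu n)" using X'H by (metis image_eqI)
qed

lemma C8: "phi2 G T \<sigma> n ` nPic G T \<sigma> n = {Y \<in> Mgrp G \<sigma> n. phi3 G T \<sigma> n Y = cls2 G T \<sigma> (mu n) (\<lambda>_. 1)}"
proof (intro equalityI subsetI)
  fix Y assume "Y \<in> phi2 G T \<sigma> n ` nPic G T \<sigma> n"
  then obtain X where XN: "X \<in> nPic G T \<sigma> n" and YX: "Y = phi2 G T \<sigma> n X" by blast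
  have YM: "Y \<in> Mgrp G \<sigma> n" using C2[OF XN] YX by simp
  have XP: "X \<in> Pic G T \<sigma>" using XN unfolding nPic_def by simp
  have ck: "pick X \<in> Z1 G T \<sigma> Kunits" using Pic_Z1[OF XP] by simp
  obtain b where b: "phi2 G T \<sigma> n X = Mcls G \<sigma> n b" "b \<noteq> 0" "\<forall>g\<in>carrier G. pick X g ^ n = \<sigma> g b / b"
    by (rule phi2_b[OF XN])
  have gb: "Ginv_mod G \<sigma> n b" by (rule b_Ginv[OF ck b(2,3)])
  have Yb: "Y = Mcls G \<sigma> n b" using YX b(1) by simp
  have ra: "relM n b (pick Y)" using Mgrp_pick_rel[OF gb] Yb by simp
  have ga: "Ginv_mod G \<sigma> n (pick Y)" using Mgrp_pick[OF YM] by simp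
  note Da = D_props[OF ga]
  have cc: "cont1 G T Kunits (pick X)" using ck unfolding Z1_def by simp
  have eb: "\<forall>g\<in>carrier G. \<sigma> g b = b * pick X g ^ n" using b(2,3) by simp
  have r0: "rel2 (mu n) (del (pick X)) (del (Dfun n (pick Y)))"
    by (rule D_rel[OF cc b(2) eb _ _ _ ra]) (use Ginv_nz[OF ga] Da in auto)
  have r1: "rel2 (mu n) (\<lambda>_. 1) (del (Dfun n (pick Y)))"
    by (rule rel2_cong[OF subA_mu r0]) (simp_all add: del_coc[OF subA_K ck])
  have "phi3 G T \<sigma> n Y = cls2 G T \<sigma> (mu n) (\<lambda>_. 1)" unfolding phi3_eq using cls2_eq[OF subA_mu r1] by simp
  then show "Y \<in> {Y \<in> Mgrp G \<sigma> n. phi3 G T \<sigma> n Y = cls2 G T \<sigma> (mu n) (\<lambda>_. 1)}" using YM by simp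
next
  fix Y assume "Y \<in> {Y \<in> Mgrp G \<sigma> n. phi3 G T \<sigma> n Y = cls2 G T \<sigma> (mu n) (\<lambda>_. 1)}"
  then have YM: "Y \<in> Mgrp G \<sigma> n" and Y1: "phi3 G T \<sigma> n Y = cls2 G T \<sigma> (mu n) (\<lambda>_. 1)" by auto
  let ?a = "pick Y"
  have ga: "Ginv_mod G \<sigma> n ?a" and Ya: "Y = Mcls G \<sigma> n ?a" using Mgrp_pick[OF YM] by auto
  note Da = D_props[OF ga]
  let ?d = "Dfun n ?a"
  have "cls2 G T \<sigma> (mu n) (del ?d) = cls2 G T \<sigma> (mu n) (\<lambda>_. 1)" using Y1 unfolding phi3_eq .
  then have "rel2 (mu n) (del ?d) (\<lambda>_. 1)" using cls2_eq_iff[OF subA_mu Z2_one[OF subA_mu]] by simp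
  then obtain eps where ce: "cont1 G T (mu n) eps" and ee: "\<forall>g\<in>carrier G. \<forall>h\<in>carrier G. 1 = del ?d (g, h) * del eps (g, h)"
    unfolding rel2_def[OF subA_mu] by auto
  have eK: "\<And>g. g \<in> carrier G \<Longrightarrow> eps g \<in> mu n" and lce: "lc eps" using ce unfolding cont1_iff by auto
  have dK: "\<And>g. g \<in> carrier G \<Longrightarrow> ?d g \<noteq> 0" and lcd: "lc ?d" using Da unfolding cont1_iff by auto
  define d' where "d' g = ?d g * eps g" for g
  have d'nz: "\<And>g. g \<in> carrier G \<Longrightarrow> d' g \<noteq> 0" unfolding d'_def using dK eK by (simp add: mu_iff)
  have d'n: "\<And>g. g \<in> carrier G \<Longrightarrow> d' g ^ n = ?d g ^ n" unfolding d'_def using eK by (simp add: mu_iff power_mult_distrib)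
  have d'k: "d' \<in> Z1 G T \<sigma> Kunits" unfolding Z1_iff[OF subA_K]
  proof (intro conjI ballI)
    show "lc d'" unfolding d'_def using lc_comb[OF lcd lce, of "\<lambda>x y. x * y"] by simp
    fix g assume g: "g \<in> carrier G"
    show "d' g \<in> Kunits" using d'nz[OF g] by simp
    fix h assume h: "h \<in> carrier G"
    have "del d' (g, h) = 1" unfolding d'_def using del_mult[OF g h, of ?d eps] ee g h by simp
    then show "d' (g \<otimes> h) = d' g * \<sigma> g (d' h)" unfolding del_simp using d'nz[of "g \<otimes> h"] g h
      by (simp add: field_simps)
  qed
  let ?X = "cls1 G T \<sigma> Kunits d'"
  have XP: "?X \<in> Pic G T \<sigma>" by (rule Pic_I[OF d'k])
  have e': "\<forall>g\<in>carrier G. d' g ^ n = \<sigma> g ?a / ?a" using Da d'n Ginv_nz[OF ga] by simp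
  have rx: "rel1 Kunits d' (pick ?X)" using cls1_pick_rel[OF subA_K d'k] by simp
  have ex: "\<exists>b. b \<noteq> 0 \<and> (\<forall>g\<in>carrier G. pick ?X g ^ n = \<sigma> g b / b)"
    by (rule rel1_pow_cob[OF rx Ginv_nz[OF ga] e'])
  have XN: "?X \<in> nPic G T \<sigma> n" using nPic_iff[OF XP] ex by simp
  obtain b where b: "phi2 G T \<sigma> n ?X = Mcls G \<sigma> n b" "b \<noteq> 0" "\<forall>g\<in>carrier G. pick ?X g ^ n = \<sigma> g b / b"
    by (rule phi2_gen[OF ex])
  have "relM n ?a b" by (rule b_rel[OF Ginv_nz[OF ga] b(2) e' b(3) rx])
  then have "Mcls G \<sigma> n ?a = Mcls G \<sigma> n b" by (rule Mcls_eq[OF ga])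
  then have "phi2 G T \<sigma> n ?X = Y" using b(1) Ya by simp
  then show "Y \<in> phi2 G T \<sigma> n ` nPic G T \<sigma> n" using XN by (metis image_eqI)
qed

end


definition irr :: "'k::field poly \<Rightarrow> bool" where
  "irr q \<longleftrightarrow> 0 < degree q \<and> (\<forall>d. d dvd q \<longrightarrow> degree d = 0 \<or> degree d = degree q)"

lemma irr_nz: "irr q \<Longrightarrow> q \<noteq> 0"
  unfolding irr_def by auto

lemma deg0_const: "degree (p :: 'k::field poly) = 0 \<Longrightarrow> p = [:coeff p 0:]"
  using degree_0_id by metis

lemma irr_bez:
  fixes q p :: "'k::field poly"
  assumes q: "irr q" and nd: "\<not> q dvd p"
  shows "\<exists>u w. u * q + w * p = 1"
proof -
  define I where "I = {r. r \<noteq> 0 \<and> (\<exists>u w. r = u * q + w * p)}"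
  have "q \<in> I" unfolding I_def using irr_nz[OF q] by (auto intro: exI[of _ 1] exI[of _ 0])
  then obtain r where r: "r \<in> I" and rmin: "\<forall>s. s \<in> I \<longrightarrow> degree r \<le> degree s"
    using ex_has_least_nat[of "\<lambda>s. s \<in> I" q degree] by blast
  obtain u0 w0 where r0: "r \<noteq> 0" "r = u0 * q + w0 * p" using r unfolding I_def by blast
  have rdvd: "r dvd s" if s: "s = u * q + w * p" for s u w
  proof (rule ccontr)
    assume "\<not> r dvd s"
    then have nz: "s mod r \<noteq> 0" by (simp add: dvd_eq_mod_eq_0)
    have "s mod r = s - (s div r) * r" by (simp add: mod_div_mult_eq[symmetric] algebra_simps)
    also have "\<dots> = (u - (s div r) * u0) * q + (w - (s div r) * w0) * p" using s r0 by (simp add: algebra_simps)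
    finally have "s mod r \<in> I" unfolding I_def using nz by blast
    then have "degree r \<le> degree (s mod r)" using rmin by blast
    moreover have "degree (s mod r) < degree r" by (rule degree_mod_less'[OF r0(1) nz])
    ultimately show False by simp
  qed
  have rq: "r dvd q" by (rule rdvd[of q 1 0]) simp
  have rp: "r dvd p" by (rule rdvd[of p 0 1]) simp
  have "degree r = 0 \<or> degree r = degree q" using q rq unfolding irr_def by blast
  moreover have "degree r \<noteq> degree q"
  proof
    assume dq: "degree r = degree q"
    obtain k where k: "q = r * k" using rq by (elim dvdE)
    have "k \<noteq> 0" using k irr_nz[OF q] by auto
    then have "degree k = 0" using dq k r0(1) degree_mult_eq[of r k] by simp
    then obtain c where kc: "k = [:c:]" by (elim degree_eq_zeroE)
    have "c \<noteq> 0" using \<open>k \<noteq> 0\<close> kc by simp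
    then have "r = smult (inverse c) q" using k kc by simp
    then have "q dvd r" by (simp add: dvd_smult)
    then have "q dvd p" using rp by (rule dvd_trans)
    then show False using nd by simp
  qed
  ultimately have "degree r = 0" by simp
  then obtain c where rc: "r = [:c:]" by (elim degree_eq_zeroE)
  have c0: "c \<noteq> 0" using r0(1) rc by simp
  have "smult (inverse c) r = 1" using rc c0 by (simp add: one_pCons)
  then have "smult (inverse c) u0 * q + smult (inverse c) w0 * p = 1"
    using r0(2) by (simp add: smult_add_right)
  then show ?thesis by blast
qed

lemma irr_prime:
  fixes q :: "'k::field poly"
  assumes q: "irr q" and d: "q dvd a * b" and na: "\<not> q dvd a"
  shows "q dvd b"
proof -
  obtain u w where uw: "u * q + w * a = 1" using irr_bez[OF q na] by blast
  have "b = (u * b) * q + w * (a * b)" using uw by (metis (no_types, lifting) distrib_right mult.commute mult.left_commute mult_1)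
  moreover have "q dvd (u * b) * q + w * (a * b)" using d by simp
  ultimately show ?thesis by simp
qed

lemma monic_irr_eq:
  fixes q q' :: "'k::field poly"
  assumes q: "irr q" "lead_coeff q = 1" and q': "irr q'" "lead_coeff q' = 1" and d: "q dvd q'"
  shows "q = q'"
proof -
  obtain k where k: "q' = q * k" using d by (elim dvdE)
  have "degree q = 0 \<or> degree q = degree q'" using q' d unfolding irr_def by blast
  then have dq: "degree q = degree q'" using q unfolding irr_def by auto
  have "k \<noteq> 0" using k irr_nz[OF q'(1)] by auto
  then have "degree k = 0" using dq k irr_nz[OF q(1)] degree_mult_eq[of q k] by simp
  then obtain c where kc: "k = [:c:]" by (elim degree_eq_zeroE)
  have "lead_coeff q' = lead_coeff q * lead_coeff k" using k by (simp add: lead_coeff_mult)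
  then have "lead_coeff k = 1" using q q' by simp
  then have "c = 1" using kc by simp
  then have "k = 1" using kc by (simp add: one_pCons)
  then show ?thesis using k by simp
qed

definition irrF :: "'k::field poly \<Rightarrow> 'k poly set" where
  "irrF P = {q. irr q \<and> lead_coeff q = 1 \<and> q dvd P}"

lemma dvd_prod_irr:
  fixes x :: "'k::field poly"
  assumes fin: "finite S" and S: "\<forall>s\<in>S. irr s \<and> lead_coeff s = 1" and x: "irr x" "lead_coeff x = 1"
    and d: "x dvd \<Prod>S"
  shows "x \<in> S"
  using fin S d
proof (induction S rule: finite_induct)
  case empty
  then have "is_unit x" by simp
  then show ?case using x(1) unfolding irr_def by (simp add: is_unit_iff_degree[OF irr_nz[OF x(1)]])
next
  case (insert y S)
  have "x dvd y * \<Prod>S" using insert.prems(2) insert.hyps by simp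
  then have "x dvd y \<or> x dvd \<Prod>S" using irr_prime[OF x(1)] by blast
  then show ?case
  proof
    assume "x dvd y"
    then have "x = y" using monic_irr_eq[OF x] insert.prems(1) by simp
    then show ?case by simp
  next
    assume "x dvd \<Prod>S"
    then show ?case using insert.IH insert.prems(1) by simp
  qed
qed

lemma prod_irrF_dvd:
  fixes P :: "'k::field poly"
  assumes fin: "finite S" and S: "S \<subseteq> irrF P"
  shows "\<Prod>S dvd P"
  using fin S
proof (induction S rule: finite_induct)
  case empty then show ?case by simp
next
  case (insert x S)
  have ih: "\<Prod>S dvd P" using insert by simp
  have x: "irr x" "lead_coeff x = 1" "x dvd P" using insert.prems unfolding irrF_def by auto
  have Sm: "\<forall>s\<in>S. irr s \<and> lead_coeff s = 1" using insert.prems unfolding irrF_def by auto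
  have "\<not> x dvd \<Prod>S" using dvd_prod_irr[OF insert.hyps(1) Sm x(1,2)] insert.hyps(2) by blast
  then obtain u w where uw: "u * x + w * \<Prod>S = 1" using irr_bez[OF x(1)] by blast
  have "P = u * (x * P) + w * (\<Prod>S * P)" using uw by (metis (no_types, lifting) distrib_right mult.assoc mult_1)
  moreover have "x * \<Prod>S dvd u * (x * P)" using ih by (simp add: mult_dvd_mono)
  moreover have "x * \<Prod>S dvd w * (\<Prod>S * P)" using x(3) by (simp add: mult_dvd_mono mult.commute)
  ultimately have "x * \<Prod>S dvd P" by (metis dvd_add)
  then show ?case using insert.hyps by simp
qed

lemma irrF_finite:
  fixes P :: "'k::field poly"
  assumes P: "P \<noteq> 0"
  shows "finite (irrF P)"
proof -
  have "card S \<le> degree P" if S: "S \<subseteq> irrF P" "finite S" for S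
  proof -
    have nz: "\<forall>s\<in>S. s \<noteq> 0" using S unfolding irrF_def using irr_nz by blast
    have "card S = (\<Sum>s\<in>S. 1)" by simp
    also have "\<dots> \<le> (\<Sum>s\<in>S. degree s)" using S unfolding irrF_def irr_def by (intro sum_mono) auto
    also have "\<dots> = degree (\<Prod>S)" using degree_prod_eq_sum_degree[of S id] nz by simp
    also have "\<dots> \<le> degree P" by (rule dvd_imp_degree_le[OF prod_irrF_dvd[OF S(2,1)] P])
    finally show ?thesis .
  qed
  then show ?thesis using finite_if_finite_subsets_card_bdd by blast
qed

lemma irr_exists:
  fixes P :: "'k::field poly"
  assumes P: "0 < degree P"
  shows "\<exists>q. q \<in> irrF P"
proof -
  define D where "D = {d. d dvd P \<and> 0 < degree d}"
  have "P \<in> D" unfolding D_def using P by simp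
  then obtain d where d: "d \<in> D" and dmin: "\<forall>e. e \<in> D \<longrightarrow> degree d \<le> degree e"
    using ex_has_least_nat[of "\<lambda>s. s \<in> D" P degree] by blast
  have P0: "P \<noteq> 0" using P by auto
  have d0: "d \<noteq> 0" using d unfolding D_def by auto
  have irrd: "irr d" unfolding irr_def
  proof (intro conjI allI impI)
    show "0 < degree d" using d unfolding D_def by simp
    fix e assume e: "e dvd d"
    have "e dvd P" using e d unfolding D_def by (auto intro: dvd_trans)
    moreover have "degree e \<le> degree d" by (rule dvd_imp_degree_le[OF e d0])
    ultimately show "degree e = 0 \<or> degree e = degree d" using dmin unfolding D_def by force
  qed
  let ?c = "inverse (lead_coeff d)"
  have lc: "lead_coeff d \<noteq> 0" using d0 by simp
  have "irr (smult ?c d)" using irrd lc unfolding irr_def by (simp add: dvd_smult_iff)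
  moreover have "lead_coeff (smult ?c d) = 1" using lc by (simp add: lead_coeff_smult)
  moreover have "smult ?c d dvd P" using d lc unfolding D_def by (simp add: smult_dvd)
  ultimately show ?thesis unfolding irrF_def by blast
qed

definition enc :: "'k::field poly \<Rightarrow> 'k poly \<Rightarrow> 'k list" where
  "enc q p = coeffs (p mod q)"

definition Lf :: "'k::field poly \<Rightarrow> 'k list ring" where
  "Lf q = \<lparr>carrier = range (enc q), mult = (\<lambda>x y. enc q (Poly x * Poly y)), one = enc q 1,
     zero = enc q 0, add = (\<lambda>x y. enc q (Poly x + Poly y))\<rparr>"

lemma Poly_enc[simp]: "Poly (enc q p) = p mod q"
  unfolding enc_def by simp

lemma enc_eq_iff: "enc q p = enc q p' \<longleftrightarrow> p mod q = p' mod q"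
  unfolding enc_def using coeffs_eq_iff by metis

lemma enc_mod[simp]: "enc q (p mod q) = enc q p"
  unfolding enc_def by simp

lemma Lf_carrier: "carrier (Lf q) = range (enc q)"
  unfolding Lf_def by simp

lemma Lf_enc_in[simp]: "enc q p \<in> carrier (Lf q)"
  unfolding Lf_carrier by simp

lemma Lf_add[simp]: "enc q p \<oplus>\<^bsub>Lf q\<^esub> enc q p' = enc q (p + p')"
  unfolding Lf_def by (simp add: enc_eq_iff mod_add_eq)

lemma Lf_mult[simp]: "enc q p \<otimes>\<^bsub>Lf q\<^esub> enc q p' = enc q (p * p')"
  unfolding Lf_def by (simp add: enc_eq_iff mod_mult_eq)

lemma Lf_zero: "\<zero>\<^bsub>Lf q\<^esub> = enc q 0"
  unfolding Lf_def by simp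

lemma Lf_one: "\<one>\<^bsub>Lf q\<^esub> = enc q 1"
  unfolding Lf_def by simp

lemma Lf_carrierE: "x \<in> carrier (Lf q) \<Longrightarrow> (\<And>p. x = enc q p \<Longrightarrow> R) \<Longrightarrow> R"
  unfolding Lf_carrier by blast

lemma Lf_cring: "cring (Lf q)"
proof (rule cringI)
  show "abelian_group (Lf q)"
  proof (rule abelian_groupI)
    fix x y assume "x \<in> carrier (Lf q)" "y \<in> carrier (Lf q)"
    then show "x \<oplus>\<^bsub>Lf q\<^esub> y \<in> carrier (Lf q)" by (auto elim!: Lf_carrierE)
  next
    show "\<zero>\<^bsub>Lf q\<^esub> \<in> carrier (Lf q)" by (simp add: Lf_zero)
  next
    fix x y z assume "x \<in> carrier (Lf q)" "y \<in> carrier (Lf q)" "z \<in> carrier (Lf q)"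
    then show "x \<oplus>\<^bsub>Lf q\<^esub> y \<oplus>\<^bsub>Lf q\<^esub> z = x \<oplus>\<^bsub>Lf q\<^esub> (y \<oplus>\<^bsub>Lf q\<^esub> z)"
      by (auto elim!: Lf_carrierE simp: add.assoc)
  next
    fix x y assume "x \<in> carrier (Lf q)" "y \<in> carrier (Lf q)"
    then show "x \<oplus>\<^bsub>Lf q\<^esub> y = y \<oplus>\<^bsub>Lf q\<^esub> x" by (auto elim!: Lf_carrierE simp: add.commute)
  next
    fix x assume "x \<in> carrier (Lf q)"
    then show "\<zero>\<^bsub>Lf q\<^esub> \<oplus>\<^bsub>Lf q\<^esub> x = x" by (auto elim!: Lf_carrierE simp: Lf_zero)
  next
    fix x assume "x \<in> carrier (Lf q)"
    then obtain p where p: "x = enc q p" by (rule Lf_carrierE)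
    have "enc q (- p) \<oplus>\<^bsub>Lf q\<^esub> x = \<zero>\<^bsub>Lf q\<^esub>" unfolding p by (simp add: Lf_zero)
    then show "\<exists>y\<in>carrier (Lf q). y \<oplus>\<^bsub>Lf q\<^esub> x = \<zero>\<^bsub>Lf q\<^esub>" by (intro bexI[of _ "enc q (- p)"]) simp_all
  qed
next
  show "comm_monoid (Lf q)"
  proof (rule comm_monoidI)
    fix x y assume "x \<in> carrier (Lf q)" "y \<in> carrier (Lf q)"
    then show "x \<otimes>\<^bsub>Lf q\<^esub> y \<in> carrier (Lf q)" by (auto elim!: Lf_carrierE)
  next
    show "\<one>\<^bsub>Lf q\<^esub> \<in> carrier (Lf q)" by (simp add: Lf_one)
  next
    fix x y z assume "x \<in> carrier (Lf q)" "y \<in> carrier (Lf q)" "z \<in> carrier (Lf q)"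
    then show "x \<otimes>\<^bsub>Lf q\<^esub> y \<otimes>\<^bsub>Lf q\<^esub> z = x \<otimes>\<^bsub>Lf q\<^esub> (y \<otimes>\<^bsub>Lf q\<^esub> z)"
      by (auto elim!: Lf_carrierE simp: mult.assoc)
  next
    fix x assume "x \<in> carrier (Lf q)"
    then show "\<one>\<^bsub>Lf q\<^esub> \<otimes>\<^bsub>Lf q\<^esub> x = x" by (auto elim!: Lf_carrierE simp: Lf_one)
  next
    fix x y assume "x \<in> carrier (Lf q)" "y \<in> carrier (Lf q)"
    then show "x \<otimes>\<^bsub>Lf q\<^esub> y = y \<otimes>\<^bsub>Lf q\<^esub> x" by (auto elim!: Lf_carrierE simp: mult.commute)
  qed
next
  fix x y z assume "x \<in> carrier (Lf q)" "y \<in> carrier (Lf q)" "z \<in> carrier (Lf q)"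
  then show "(x \<oplus>\<^bsub>Lf q\<^esub> y) \<otimes>\<^bsub>Lf q\<^esub> z = x \<otimes>\<^bsub>Lf q\<^esub> z \<oplus>\<^bsub>Lf q\<^esub> y \<otimes>\<^bsub>Lf q\<^esub> z"
    by (auto elim!: Lf_carrierE simp: distrib_right)
qed

lemma one_mod_irr: "irr q \<Longrightarrow> 1 mod q = (1 :: 'k::field poly)"
  unfolding irr_def by (intro mod_poly_less) simp

lemma Lf_field: "irr q \<Longrightarrow> field (Lf q)"
proof -
  assume q: "irr q"
  interpret cring "Lf q" by (rule Lf_cring)
  show ?thesis
  proof (rule cring_fieldI2)
    show "\<zero>\<^bsub>Lf q\<^esub> \<noteq> \<one>\<^bsub>Lf q\<^esub>" unfolding Lf_zero Lf_one enc_eq_iff using one_mod_irr[OF q] by simp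
  next
    fix a assume a: "a \<in> carrier (Lf q)" "a \<noteq> \<zero>\<^bsub>Lf q\<^esub>"
    obtain p where p: "a = enc q p" using a(1) by (rule Lf_carrierE)
    have "\<not> q dvd p" using a(2) unfolding p Lf_zero enc_eq_iff by (simp add: dvd_eq_mod_eq_0)
    then obtain u w where uw: "u * q + w * p = 1" using irr_bez[OF q] by blast
    have "a \<otimes>\<^bsub>Lf q\<^esub> enc q w = \<one>\<^bsub>Lf q\<^esub>" unfolding p Lf_mult Lf_one enc_eq_iff
    proof -
      have "p * w = 1 - u * q" using uw by (simp add: algebra_simps)
      then show "p * w mod q = 1 mod q" by (simp add: mod_diff_eq[symmetric])
    qed
    then show "\<exists>b\<in>carrier (Lf q). a \<otimes>\<^bsub>Lf q\<^esub> b = \<one>\<^bsub>Lf q\<^esub>" by (intro bexI[of _ "enc q w"]) simp_all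
  qed
qed

lemma Lf_pow: "enc q p [^]\<^bsub>Lf q\<^esub> (k :: nat) = enc q (p ^ k)"
  by (induction k) (simp_all add: Lf_one mult.commute)

lemma Lf_finsum:
  fixes k :: nat
  shows "(\<Oplus>\<^bsub>Lf q\<^esub>i\<in>{..<k}. enc q (f i)) = enc q (\<Sum>i<k. f i)"
proof (induction k)
  case 0
  interpret cring "Lf q" by (rule Lf_cring)
  show ?case by (simp add: Lf_zero)
next
  case (Suc k)
  interpret cring "Lf q" by (rule Lf_cring)
  have "(\<Oplus>\<^bsub>Lf q\<^esub>i\<in>{..<Suc k}. enc q (f i)) = (\<Oplus>\<^bsub>Lf q\<^esub>i\<in>insert k {..<k}. enc q (f i))"
    by (simp add: lessThan_Suc)
  also have "\<dots> = enc q (f k) \<oplus>\<^bsub>Lf q\<^esub> (\<Oplus>\<^bsub>Lf q\<^esub>i\<in>{..<k}. enc q (f i))"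
    by (rule finsum_insert) auto
  also have "\<dots> = enc q (\<Sum>i<Suc k. f i)" using Suc by (simp add: add.commute)
  finally show ?case .
qed


context PG
begin

lemma sig_sum: "g \<in> carrier G \<Longrightarrow> \<sigma> g (sum f A) = (\<Sum>x\<in>A. \<sigma> g (f x))"
proof (induction A rule: infinite_finite_induct)
  case (infinite A) then show ?case by simp
next
  case empty then show ?case by simp
next
  case (insert x F) then show ?case by simp
qed

lemma mp_coeff: "g \<in> carrier G \<Longrightarrow> coeff (map_poly (\<sigma> g) p) i = \<sigma> g (coeff p i)"
  by (simp add: coeff_map_poly)

lemma mp_add: "g \<in> carrier G \<Longrightarrow> map_poly (\<sigma> g) (p + q) = map_poly (\<sigma> g) p + map_poly (\<sigma> g) q"
  by (intro poly_eqI) (simp add: mp_coeff)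

lemma mp_mult: "g \<in> carrier G \<Longrightarrow> map_poly (\<sigma> g) (p * q) = map_poly (\<sigma> g) p * map_poly (\<sigma> g) q"
  by (intro poly_eqI) (simp add: mp_coeff coeff_mult sig_sum)

lemma mp_const: "g \<in> carrier G \<Longrightarrow> map_poly (\<sigma> g) [:x:] = [:\<sigma> g x:]"
  by (simp add: map_poly_pCons)

lemma mp_pCons: "g \<in> carrier G \<Longrightarrow> map_poly (\<sigma> g) (pCons a p) = pCons (\<sigma> g a) (map_poly (\<sigma> g) p)"
  by (simp add: map_poly_pCons)

lemma mp_pcompose: "g \<in> carrier G \<Longrightarrow> map_poly (\<sigma> g) (pcompose p r) = pcompose (map_poly (\<sigma> g) p) (map_poly (\<sigma> g) r)"
  by (induction p rule: pCons_induct) (simp_all add: pcompose_pCons mp_add mp_mult mp_const mp_pCons)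

lemma mp_comp: "g \<in> carrier G \<Longrightarrow> h \<in> carrier G \<Longrightarrow> map_poly (\<sigma> g) (map_poly (\<sigma> h) p) = map_poly (\<sigma> (g \<otimes> h)) p"
  by (intro poly_eqI) (simp add: mp_coeff sig_comp)

lemma mp_one: "map_poly (\<sigma> \<one>) p = p"
  by (intro poly_eqI) (simp add: mp_coeff)

lemma mp_degree: "g \<in> carrier G \<Longrightarrow> degree (map_poly (\<sigma> g) p) = degree p"
  by (rule degree_map_poly) simp

lemma lc_map: "lc (\<lambda>g. map (\<sigma> g) xs)"
proof (induction xs)
  case Nil then show ?case by simp
next
  case (Cons x xs)
  show ?case using lc_comb[OF lc_sig[of x] Cons.IH, of "\<lambda>a l. a # l"] by simp
qed

end

locale PGc = PG +
  fixes c :: "'a \<Rightarrow> 'b::field"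
  assumes cZ: "c \<in> Z1 G T \<sigma> Kunits"
begin

lemma c_nz: "g \<in> carrier G \<Longrightarrow> c g \<noteq> 0"
  using Z1_nz[OF subA_K cZ] by blast

lemma c_coc: "g \<in> carrier G \<Longrightarrow> h \<in> carrier G \<Longrightarrow> c (g \<otimes> h) = c g * \<sigma> g (c h)"
  using Z1_coc[OF subA_K cZ] by blast

lemma c_lc: "lc c" using Z1_lc[OF subA_K cZ] .

lemma c_one: "c \<one> = 1"
proof -
  have "c \<one> = c \<one> * c \<one>" using c_coc[of \<one> \<one>] by simp
  then show ?thesis using c_nz[of \<one>] by simp
qed

definition tw :: "'a \<Rightarrow> 'b poly \<Rightarrow> 'b poly" where
  "tw g p = pcompose (map_poly (\<sigma> g) p) [:0, c g:]"

lemma tw_add: "g \<in> carrier G \<Longrightarrow> tw g (p + q) = tw g p + tw g q"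
  unfolding tw_def by (simp add: mp_add pcompose_add)

lemma tw_mult: "g \<in> carrier G \<Longrightarrow> tw g (p * q) = tw g p * tw g q"
  unfolding tw_def by (simp add: mp_mult pcompose_mult)

lemma tw_const: "g \<in> carrier G \<Longrightarrow> tw g [:x:] = [:\<sigma> g x:]"
  unfolding tw_def by (simp add: mp_const)

lemma tw_0: "tw g 0 = 0"
  unfolding tw_def by simp

lemma tw_minus: "g \<in> carrier G \<Longrightarrow> tw g (p - q) = tw g p - tw g q"
  using tw_add[of g "p - q" q] by simp

lemma tw_X: "g \<in> carrier G \<Longrightarrow> tw g [:0, 1:] = [:0, c g:]"
  unfolding tw_def by (simp add: mp_pCons pcompose_pCons)

lemma tw_smult: "g \<in> carrier G \<Longrightarrow> tw g (smult a p) = smult (\<sigma> g a) (tw g p)"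
  using tw_mult[of g "[:a:]" p] tw_const[of g a] by simp

lemma tw_pow: "g \<in> carrier G \<Longrightarrow> tw g (p ^ k) = tw g p ^ k"
proof (induction k)
  case 0 then show ?case using tw_const[of g 1] by (simp add: one_pCons)
next
  case (Suc k) then show ?case by (simp add: tw_mult)
qed

lemma tw_comp: "g \<in> carrier G \<Longrightarrow> h \<in> carrier G \<Longrightarrow> tw g (tw h p) = tw (g \<otimes> h) p"
proof -
  assume g: "g \<in> carrier G" and h: "h \<in> carrier G"
  have "tw g (tw h p) = pcompose (pcompose (map_poly (\<sigma> g) (map_poly (\<sigma> h) p)) [:0, \<sigma> g (c h):]) [:0, c g:]"
    unfolding tw_def using g by (simp add: mp_pcompose mp_pCons)
  also have "\<dots> = pcompose (map_poly (\<sigma> (g \<otimes> h)) p) (pcompose [:0, \<sigma> g (c h):] [:0, c g:])"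
    using g h by (simp add: mp_comp pcompose_assoc)
  also have "pcompose [:0, \<sigma> g (c h):] [:0, c g:] = [:0, c (g \<otimes> h):]"
    using g h by (simp add: pcompose_pCons c_coc mult.commute)
  finally show ?thesis unfolding tw_def .
qed

lemma tw_one: "tw \<one> p = p"
  unfolding tw_def by (simp add: mp_one c_one)

lemma tw_degree: "g \<in> carrier G \<Longrightarrow> degree (tw g p) = degree p"
  unfolding tw_def using c_nz[of g] by (simp add: degree_pcompose mp_degree)

lemma tw_eq0: "g \<in> carrier G \<Longrightarrow> tw g p = 0 \<longleftrightarrow> p = 0"
proof
  assume g: "g \<in> carrier G" and "tw g p = 0"
  then have "tw (inv g) (tw g p) = 0" by (simp add: tw_0)
  then show "p = 0" using g by (simp add: tw_comp tw_one)
qed (simp add: tw_0)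

lemma tw_dvd: "g \<in> carrier G \<Longrightarrow> a dvd b \<Longrightarrow> tw g a dvd tw g b"
  by (elim dvdE) (simp add: tw_mult)

lemma tw_inv: "g \<in> carrier G \<Longrightarrow> tw (inv g) (tw g p) = p"
  by (simp add: tw_comp tw_one)

lemma tw_inv2: "g \<in> carrier G \<Longrightarrow> tw g (tw (inv g) p) = p"
  by (simp add: tw_comp tw_one)

lemma tw_Xpow: "g \<in> carrier G \<Longrightarrow> tw g ([:0, 1:] ^ k) = smult (c g ^ k) ([:0, 1:] ^ k)"
proof -
  assume g: "g \<in> carrier G"
  have "tw g ([:0, 1:] ^ k) = [:0, c g:] ^ k" using g by (simp add: tw_pow tw_X)
  moreover have e: "smult (c g) [:0, 1:] = [:0, c g:]" by simp
  have "[:0, c g:] ^ k = smult (c g ^ k) ([:0, 1:] ^ k)" unfolding e[symmetric] by (rule smult_power)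
  ultimately show ?thesis by simp
qed

lemma tw_lc: "lc (\<lambda>g. tw g p)"
proof -
  have "lc (\<lambda>g. pcompose (Poly (map (\<sigma> g) (coeffs p))) [:0, c g:])"
    using lc_comb[OF lc_map[of "coeffs p"] c_lc, of "\<lambda>l x. pcompose (Poly l) [:0, x:]"] by simp
  then show ?thesis unfolding tw_def map_poly_def .
qed

end

definition Nrm :: "'k::field poly \<Rightarrow> 'k poly" where
  "Nrm r = smult (inverse (lead_coeff r)) r"

lemma Nrm_smult: "a \<noteq> 0 \<Longrightarrow> Nrm (smult a r) = Nrm r"
  unfolding Nrm_def by (cases "r = 0") (simp_all add: lead_coeff_smult smult_smult field_simps)

lemma Nrm_monic: "lead_coeff r = 1 \<Longrightarrow> Nrm r = r"
  unfolding Nrm_def by simp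

lemma Nrm_lead: "r \<noteq> 0 \<Longrightarrow> lead_coeff (Nrm r) = 1"
  unfolding Nrm_def by (simp add: lead_coeff_smult)

lemma Nrm_back: "r = smult (lead_coeff r) (Nrm r)"
  unfolding Nrm_def by (cases "r = 0") (simp_all add: smult_smult)

lemma irr_smult: "a \<noteq> 0 \<Longrightarrow> irr r \<Longrightarrow> irr (smult a r)"
  unfolding irr_def by (simp add: dvd_smult_iff)

lemma Nrm_irr: "irr r \<Longrightarrow> irr (Nrm r)"
  unfolding Nrm_def using irr_nz by (intro irr_smult) auto

context PGc
begin

definition nact where "nact g p = Nrm (tw g p)"

lemma irr_tw: "g \<in> carrier G \<Longrightarrow> irr q \<Longrightarrow> irr (tw g q)"
  unfolding irr_def
proof (intro conjI allI impI)
  assume g: "g \<in> carrier G" and q: "0 < degree q \<and> (\<forall>d. d dvd q \<longrightarrow> degree d = 0 \<or> degree d = degree q)"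
  show "0 < degree (tw g q)" using q g by (simp add: tw_degree)
  fix d assume d: "d dvd tw g q"
  have "tw (inv g) d dvd q" using tw_dvd[OF inv_closed[OF g] d] g by (simp add: tw_inv)
  then have "degree (tw (inv g) d) = 0 \<or> degree (tw (inv g) d) = degree q" using q by blast
  then show "degree d = 0 \<or> degree d = degree (tw g q)" using g by (simp add: tw_degree)
qed

lemma nact_comp:
  assumes g: "g \<in> carrier G" and h: "h \<in> carrier G" and q: "q \<noteq> 0"
  shows "nact (g \<otimes> h) q = nact g (nact h q)"
proof -
  let ?l = "lead_coeff (tw h q)"
  have l: "?l \<noteq> 0" using q h by (simp add: tw_eq0)
  have "tw (g \<otimes> h) q = tw g (tw h q)" using g h by (simp add: tw_comp)
  also have "tw h q = smult ?l (nact h q)" unfolding nact_def by (rule Nrm_back)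
  finally have "tw (g \<otimes> h) q = smult (\<sigma> g ?l) (tw g (nact h q))" using g by (simp add: tw_smult)
  then show ?thesis unfolding nact_def using l g by (simp add: Nrm_smult)
qed

lemma nact_one: "lead_coeff q = 1 \<Longrightarrow> nact \<one> q = q"
  unfolding nact_def by (simp add: tw_one Nrm_monic)

lemma nact_lc: "lc (\<lambda>g. nact g q)"
  unfolding nact_def by (rule lc_comp[OF tw_lc])

end

locale PGcb = PGc +
  fixes b :: 'b and n :: nat
  assumes b_nz: "b \<noteq> 0" and bc: "\<forall>g\<in>carrier G. \<sigma> g b = b * c g ^ n" and n_pos: "0 < n"
begin

definition Pb where "Pb = [:0, 1:] ^ n - [:b:]"

lemma Pb_coeff: "coeff Pb i = (if i = n then 1 else 0) - (if i = 0 then b else 0)"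
  unfolding Pb_def by (simp add: monom_altdef[of 1, simplified, symmetric] coeff_pCons split: nat.split)

lemma Pb_degree: "degree Pb = n"
proof (rule antisym)
  show "degree Pb \<le> n" by (rule degree_le) (simp add: Pb_coeff)
  show "n \<le> degree Pb" by (rule le_degree) (use n_pos in \<open>simp add: Pb_coeff\<close>)
qed

lemma Pb_nz: "Pb \<noteq> 0" using Pb_degree n_pos by auto

lemma tw_Pb: "g \<in> carrier G \<Longrightarrow> tw g Pb = smult (c g ^ n) Pb"
  unfolding Pb_def using bc by (simp add: tw_minus tw_Xpow tw_const smult_diff_right mult.commute)

lemma nact_F: "g \<in> carrier G \<Longrightarrow> q \<in> irrF Pb \<Longrightarrow> nact g q \<in> irrF Pb"
  unfolding irrF_def nact_def
proof (elim CollectE conjE, intro CollectI conjI)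
  assume g: "g \<in> carrier G" and q: "irr q" "lead_coeff q = 1" "q dvd Pb"
  show "irr (Nrm (tw g q))" by (rule Nrm_irr[OF irr_tw[OF g q(1)]])
  show "lead_coeff (Nrm (tw g q)) = 1" using irr_nz[OF irr_tw[OF g q(1)]] by (rule Nrm_lead)
  have "tw g q dvd smult (c g ^ n) Pb" using tw_dvd[OF g q(3)] g by (simp add: tw_Pb)
  then have "tw g q dvd Pb" using c_nz[OF g] by (simp add: dvd_smult_iff)
  then show "Nrm (tw g q) dvd Pb" unfolding Nrm_def using irr_nz[OF irr_tw[OF g q(1)]] by (simp add: smult_dvd)
qed

lemma stable:
  assumes hyp: "\<forall>H. subgroup H G \<and> openin T H \<and> finite (rcosets H) \<longrightarrow> H = carrier G"
    and q: "q \<in> irrF Pb"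
  shows "\<forall>g\<in>carrier G. q dvd tw g q"
proof -
  have q0: "q \<noteq> 0" and qm: "lead_coeff q = 1" using q irr_nz unfolding irrF_def by auto
  define H where "H = {g \<in> carrier G. nact g q = q}"
  have sub: "subgroup H G"
  proof (rule subgroupI)
    show "H \<subseteq> carrier G" unfolding H_def by blast
    show "H \<noteq> {}" unfolding H_def using nact_one[OF qm] by blast
  next
    fix a assume a: "a \<in> H"
    then have ac: "a \<in> carrier G" and aq: "nact a q = q" unfolding H_def by auto
    have "nact (inv a) q = nact (inv a) (nact a q)" using aq by simp
    also have "\<dots> = nact (inv a \<otimes> a) q" using nact_comp[OF inv_closed[OF ac] ac q0] by simp
    also have "\<dots> = q" using ac nact_one[OF qm] by simp
    finally show "inv a \<in> H" unfolding H_def using ac by simp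
  next
    fix a b assume "a \<in> H" "b \<in> H"
    then have ac: "a \<in> carrier G" "b \<in> carrier G" and aq: "nact a q = q" "nact b q = q" unfolding H_def by auto
    have "nact (a \<otimes> b) q = nact a (nact b q)" by (rule nact_comp[OF ac q0])
    also have "\<dots> = q" using aq by simp
    finally show "a \<otimes> b \<in> H" unfolding H_def using ac by simp
  qed
  have op: "openin T H" unfolding H_def by (rule lc_fiber_open[OF nact_lc])
  define rep where "rep r = (SOME g. g \<in> carrier G \<and> nact (inv g) q = r)" for r
  have "rcosets H \<subseteq> (\<lambda>r. H #> rep r) ` irrF Pb"
  proof
    fix C assume "C \<in> rcosets H"
    then obtain g where g: "g \<in> carrier G" and C: "C = H #> g" unfolding RCOSETS_def by blast
    let ?r = "nact (inv g) q"
    have rF: "?r \<in> irrF Pb" by (rule nact_F[OF inv_closed[OF g] q])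
    have ex: "\<exists>g'. g' \<in> carrier G \<and> nact (inv g') q = ?r" using g by blast
    have g': "rep ?r \<in> carrier G" "nact (inv (rep ?r)) q = ?r" using someI_ex[OF ex] unfolding rep_def by auto
    let ?g' = "rep ?r"
    have "nact (?g' \<otimes> inv g) q = nact ?g' (nact (inv g) q)" by (rule nact_comp[OF g'(1) inv_closed[OF g] q0])
    also have "\<dots> = nact ?g' (nact (inv ?g') q)" using g'(2) by simp
    also have "\<dots> = nact (?g' \<otimes> inv ?g') q" using nact_comp[OF g'(1) inv_closed[OF g'(1)] q0] by simp
    also have "\<dots> = q" using g'(1) nact_one[OF qm] by simp
    finally have inH: "?g' \<otimes> inv g \<in> H" unfolding H_def using g g'(1) by simp
    have "?g' = (?g' \<otimes> inv g) \<otimes> g" using g g'(1) by (simp add: m_assoc)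
    then have "?g' \<in> H #> g" using rcosI[OF inH _ g] sub unfolding subgroup_def by auto
    then have "H #> g = H #> ?g'" by (rule repr_independence[OF _ g sub])
    then show "C \<in> (\<lambda>r. H #> rep r) ` irrF Pb" using C rF by blast
  qed
  then have fin: "finite (rcosets H)" using irrF_finite[OF Pb_nz] finite_surj by blast
  have "H = carrier G" using hyp sub op fin by blast
  then have "\<forall>g\<in>carrier G. nact g q = q" unfolding H_def by blast
  then show ?thesis unfolding nact_def
  proof (intro ballI)
    fix g assume "\<forall>g\<in>carrier G. Nrm (tw g q) = q" "g \<in> carrier G"
    then have "Nrm (tw g q) = q" by blast
    then have "tw g q = smult (lead_coeff (tw g q)) q" using Nrm_back[of "tw g q"] by simp
    then show "q dvd tw g q" by (metis dvd_triv_right mult.commute smult_dvd_iff dvd_refl dvd_smult)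
  qed
qed

end


locale PGfin = PGcb +
  fixes q
  assumes qF: "q \<in> irrF Pb" and qstab: "\<forall>g\<in>carrier G. q dvd tw g q"
begin

lemma q_irr: "irr q" using qF unfolding irrF_def by simp
lemma q_dvd: "q dvd Pb" using qF unfolding irrF_def by simp
lemma q_deg: "degree q \<le> n" using dvd_imp_degree_le[OF q_dvd Pb_nz] Pb_degree by simp
lemma q_pos: "0 < degree q" using q_irr unfolding irr_def by simp

definition tau where "tau g x = enc q (tw g (Poly x))"

lemma tw_mod: "g \<in> carrier G \<Longrightarrow> tw g (p mod q) mod q = tw g p mod q"
proof -
  assume g: "g \<in> carrier G"
  have "tw g p - tw g (p mod q) = tw g (q * (p div q))"
    using g by (simp add: tw_minus[symmetric] minus_mod_eq_mult_div)
  also have "\<dots> = tw g q * tw g (p div q)" using g by (simp add: tw_mult)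
  finally have "q dvd tw g p - tw g (p mod q)" using qstab g by simp
  then show ?thesis by (metis dvd_minus_iff minus_diff_eq mod_eq_dvd_iff)
qed

lemma tau_enc: "g \<in> carrier G \<Longrightarrow> tau g (enc q p) = enc q (tw g p)"
  unfolding tau_def using tw_mod by (simp add: enc_eq_iff)

lemma tau_carrier: "g \<in> carrier G \<Longrightarrow> tau g x \<in> carrier (Lf q)"
  unfolding tau_def by simp

lemma tau_bij: "g \<in> carrier G \<Longrightarrow> bij_betw (tau g) (carrier (Lf q)) (carrier (Lf q))"
proof (rule bij_betw_byWitness[where f' = "tau (inv g)"])
  assume g: "g \<in> carrier G"
  show "\<forall>x\<in>carrier (Lf q). tau (inv g) (tau g x) = x"
    using g by (auto elim!: Lf_carrierE simp: tau_enc tw_inv)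
  show "\<forall>x\<in>carrier (Lf q). tau g (tau (inv g) x) = x"
    using g by (auto elim!: Lf_carrierE simp: tau_enc tw_inv2)
  show "tau g ` carrier (Lf q) \<subseteq> carrier (Lf q)" using tau_carrier[OF g] by blast
  show "tau (inv g) ` carrier (Lf q) \<subseteq> carrier (Lf q)" using tau_carrier[OF inv_closed[OF g]] by blast
qed

lemma tau_add: "g \<in> carrier G \<Longrightarrow> x \<in> carrier (Lf q) \<Longrightarrow> y \<in> carrier (Lf q) \<Longrightarrow>
   tau g (x \<oplus>\<^bsub>Lf q\<^esub> y) = tau g x \<oplus>\<^bsub>Lf q\<^esub> tau g y"
  by (auto elim!: Lf_carrierE simp: tau_enc tw_add)

lemma tau_mult: "g \<in> carrier G \<Longrightarrow> x \<in> carrier (Lf q) \<Longrightarrow> y \<in> carrier (Lf q) \<Longrightarrow>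
   tau g (x \<otimes>\<^bsub>Lf q\<^esub> y) = tau g x \<otimes>\<^bsub>Lf q\<^esub> tau g y"
  by (auto elim!: Lf_carrierE simp: tau_enc tw_mult)

lemma tau_iota: "g \<in> carrier G \<Longrightarrow> tau g (enc q [:x:]) = enc q [:\<sigma> g x:]"
  by (simp add: tau_enc tw_const)

lemma tau_one: "x \<in> carrier (Lf q) \<Longrightarrow> tau \<one> x = x"
  by (auto elim!: Lf_carrierE simp: tau_enc tw_one)

lemma tau_comp: "g \<in> carrier G \<Longrightarrow> h \<in> carrier G \<Longrightarrow> x \<in> carrier (Lf q) \<Longrightarrow> tau (g \<otimes> h) x = tau g (tau h x)"
  by (auto elim!: Lf_carrierE simp: tau_enc tw_comp)

lemma tau_open: "openin T {g \<in> carrier G. tau g x = x}"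
proof -
  have "lc (\<lambda>g. tau g x)" unfolding tau_def by (rule lc_comp[OF tw_lc])
  then show ?thesis by (rule lc_fiber_open)
qed

lemma alpha_pow_n: "enc q [:0, 1:] [^]\<^bsub>Lf q\<^esub> n = enc q [:b:]"
proof -
  have "q dvd [:0, 1:] ^ n - [:b:]" using q_dvd unfolding Pb_def .
  then show ?thesis by (simp add: Lf_pow enc_eq_iff mod_eq_dvd_iff)
qed

lemma span: "x \<in> carrier (Lf q) \<Longrightarrow> \<exists>cc. x = (\<Oplus>\<^bsub>Lf q\<^esub>i\<in>{..<n}. enc q [:cc i:] \<otimes>\<^bsub>Lf q\<^esub> enc q [:0, 1:] [^]\<^bsub>Lf q\<^esub> i)"
proof -
  assume "x \<in> carrier (Lf q)"
  then obtain p where p: "x = enc q p" by (rule Lf_carrierE)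
  let ?r = "p mod q"
  have dr: "degree ?r \<le> n - 1"
  proof (cases "?r = 0")
    case True then show ?thesis by simp
  next
    case False
    have "degree ?r < degree q" by (rule degree_mod_less'[OF irr_nz[OF q_irr] False])
    then show ?thesis using q_deg by simp
  qed
  have fe: "(\<lambda>i. enc q [:coeff ?r i:] \<otimes>\<^bsub>Lf q\<^esub> enc q [:0, 1:] [^]\<^bsub>Lf q\<^esub> i) = (\<lambda>i. enc q (monom (coeff ?r i) i))"
    by (rule ext) (simp add: Lf_pow monom_altdef)
  have "(\<Sum>i<n. monom (coeff ?r i) i) = (\<Sum>i\<le>n - 1. monom (coeff ?r i) i)"
    using n_pos by (intro sum.cong) auto
  also have "\<dots> = ?r" by (rule poly_as_sum_of_monoms'[OF dr])
  finally have "(\<Oplus>\<^bsub>Lf q\<^esub>i\<in>{..<n}. enc q [:coeff ?r i:] \<otimes>\<^bsub>Lf q\<^esub> enc q [:0, 1:] [^]\<^bsub>Lf q\<^esub> i) = x"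
    unfolding fe Lf_finsum p by simp
  then show ?thesis by metis
qed

end


locale PGm = PG +
  fixes sc and \<rho>
  assumes invo: "invertible_obj G T \<sigma> sc \<rho>"
begin

lemma sc_addl: "sc (a + a') m = sc a m + sc a' m" using invo unfolding invertible_obj_def by auto
lemma sc_addr: "sc a (m + m') = sc a m + sc a m'" using invo unfolding invertible_obj_def by auto
lemma sc_mult: "sc (a * a') m = sc a (sc a' m)" using invo unfolding invertible_obj_def by auto
lemma sc_1: "sc 1 m = m" using invo unfolding invertible_obj_def by auto
lemma v_ex: "\<exists>v. v \<noteq> 0 \<and> (\<forall>m. \<exists>a. m = sc a v)" using invo unfolding invertible_obj_def by auto
lemma rho_add: "g \<in> carrier G \<Longrightarrow> \<rho> g (m + m') = \<rho> g m + \<rho> g m'" using invo unfolding invertible_obj_def by auto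
lemma rho_sc: "g \<in> carrier G \<Longrightarrow> \<rho> g (sc a m) = sc (\<sigma> g a) (\<rho> g m)" using invo unfolding invertible_obj_def by auto
lemma rho_one: "\<rho> \<one> m = m" using invo unfolding invertible_obj_def by auto
lemma rho_comp: "g \<in> carrier G \<Longrightarrow> h \<in> carrier G \<Longrightarrow> \<rho> (g \<otimes> h) m = \<rho> g (\<rho> h m)" using invo unfolding invertible_obj_def by auto
lemma rho_open: "openin T {g \<in> carrier G. \<rho> g m = m}" using invo unfolding invertible_obj_def by auto

definition vv where "vv = (SOME v. v \<noteq> 0 \<and> (\<forall>m. \<exists>a. m = sc a v))"

lemma vv_prop: "vv \<noteq> 0 \<and> (\<forall>m. \<exists>a. m = sc a vv)"
  unfolding vv_def by (rule someI_ex[OF v_ex])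

lemma sc_0l: "sc 0 m = 0"
proof -
  have "sc 0 m + sc 0 m = sc 0 m + 0" using sc_addl[of 0 0 m] by simp
  then show ?thesis by simp
qed

lemma sc_0r: "sc a 0 = 0"
proof -
  have "sc a 0 + sc a 0 = sc a 0 + 0" using sc_addr[of a 0 0] by simp
  then show ?thesis by simp
qed

lemma sc_diff: "sc (a - a') m = sc a m - sc a' m"
  using sc_addl[of "a - a'" a' m] by (simp add: eq_diff_eq)

lemma sc_inj: "sc a vv = sc a' vv \<Longrightarrow> a = a'"
proof (rule ccontr)
  assume e: "sc a vv = sc a' vv" and ne: "a \<noteq> a'"
  have "sc (a - a') vv = 0" using e by (simp add: sc_diff)
  then have "sc (inverse (a - a')) (sc (a - a') vv) = 0" by (simp add: sc_0r)
  then have "vv = 0" using ne by (simp add: sc_mult[symmetric] sc_1)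
  then show False using vv_prop by simp
qed

definition crd where "crd m = (SOME a. m = sc a vv)"

lemma crd_prop: "m = sc (crd m) vv"
proof -
  have "\<exists>a. m = sc a vv" using vv_prop by blast
  from someI_ex[OF this] show ?thesis unfolding crd_def .
qed

lemma crd_unique: "m = sc a vv \<Longrightarrow> crd m = a"
  using crd_prop sc_inj by metis

lemma crd_add: "crd (m + m') = crd m + crd m'"
proof (rule crd_unique)
  show "m + m' = sc (crd m + crd m') vv" using crd_prop[of m] crd_prop[of m'] by (simp add: sc_addl)
qed

lemma crd_sc: "crd (sc a m) = a * crd m"
proof (rule crd_unique)
  show "sc a m = sc (a * crd m) vv" using crd_prop[of m] by (simp add: sc_mult)
qed

definition cm where "cm g = (SOME c. \<rho> g vv = sc c vv)"

lemma cm_prop: "\<rho> g vv = sc (cm g) vv"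
proof -
  have "\<exists>c. \<rho> g vv = sc c vv" using vv_prop by blast
  from someI_ex[OF this] show ?thesis unfolding cm_def .
qed

lemma rho_0: "g \<in> carrier G \<Longrightarrow> \<rho> g 0 = 0"
proof -
  assume g: "g \<in> carrier G"
  have "\<rho> g 0 + \<rho> g 0 = \<rho> g 0 + 0" using rho_add[OF g, of 0 0] by simp
  then show ?thesis by simp
qed

lemma crd_rho: "g \<in> carrier G \<Longrightarrow> crd (\<rho> g m) = \<sigma> g (crd m) * cm g"
proof (rule crd_unique)
  assume g: "g \<in> carrier G"
  have "\<rho> g m = \<rho> g (sc (crd m) vv)" using crd_prop[of m] by simp
  also have "\<dots> = sc (\<sigma> g (crd m)) (sc (cm g) vv)" using g by (simp add: rho_sc cm_prop)
  finally show "\<rho> g m = sc (\<sigma> g (crd m) * cm g) vv" by (simp add: sc_mult)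
qed

lemma cm_Z1: "cm \<in> Z1 G T \<sigma> Kunits"
  unfolding Z1_iff[OF subA_K]
proof (intro conjI ballI)
  fix g assume g: "g \<in> carrier G"
  show "cm g \<in> Kunits"
  proof (simp, rule notI)
    assume "cm g = 0"
    then have "\<rho> g vv = 0" using cm_prop[of g] by (simp add: sc_0l)
    then have "\<rho> (inv g) (\<rho> g vv) = 0" using rho_0[OF inv_closed[OF g]] by simp
    then have "vv = 0" using g by (simp add: rho_comp[symmetric] rho_one)
    then show False using vv_prop by simp
  qed
  fix h assume h: "h \<in> carrier G"
  have "sc (cm (g \<otimes> h)) vv = \<rho> (g \<otimes> h) vv" by (simp add: cm_prop)
  also have "\<dots> = \<rho> g (sc (cm h) vv)" using g h rho_comp[of g h vv] cm_prop[of h] by simp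
  also have "\<dots> = sc (\<sigma> g (cm h)) (sc (cm g) vv)" using g rho_sc[OF g, of "cm h" vv] cm_prop[of g] by simp
  also have "\<dots> = sc (cm g * \<sigma> g (cm h)) vv" by (simp add: sc_mult[symmetric] mult.commute)
  finally show "cm (g \<otimes> h) = cm g * \<sigma> g (cm h)" by (rule sc_inj)
next
  show "lc cm" unfolding lc_def
  proof
    fix g0 assume g0: "g0 \<in> carrier G"
    let ?U = "{y \<in> carrier G. inv g0 \<otimes> y \<in> {g \<in> carrier G. \<rho> g vv = vv}}"
    have "openin T ?U" by (rule translate_open[OF rho_open]) (use g0 in simp)
    moreover have "g0 \<in> ?U" using g0 by (simp add: rho_one)
    moreover have "\<forall>g\<in>?U. cm g = cm g0"
    proof
      fix g assume "g \<in> ?U"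
      then have g: "g \<in> carrier G" and e: "\<rho> (inv g0 \<otimes> g) vv = vv" by auto
      have "g = g0 \<otimes> (inv g0 \<otimes> g)" using g g0 by (simp add: m_assoc[symmetric])
      then have "\<rho> g vv = \<rho> g0 (\<rho> (inv g0 \<otimes> g) vv)" using g g0 rho_comp[of g0 "inv g0 \<otimes> g" vv] by simp
      then have "sc (cm g) vv = sc (cm g0) vv" using e by (simp add: cm_prop)
      then show "cm g = cm g0" by (rule sc_inj)
    qed
    ultimately show "\<exists>U. openin T U \<and> g0 \<in> U \<and> (\<forall>g\<in>U. cm g = cm g0)" by blast
  qed
qed

lemma pic_class_eq: "pic_class G T \<sigma> sc \<rho> = cls1 G T \<sigma> Kunits cm"
  unfolding pic_class_def Let_def vv_def[symmetric] cm_def[abs_def] by simp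

end


context PGm
begin

lemma main_field:
  assumes hyp: "\<forall>H. subgroup H G \<and> openin T H \<and> finite (rcosets H) \<longrightarrow> H = carrier G"
    and pp: "pic_pow G T \<sigma> (pic_class G T \<sigma> sc \<rho>) n = pic_one G T \<sigma>"
    and n: "0 < n"
  shows "\<exists>a. Ginv_mod G \<sigma> n a \<and> contained_in_root_ext G T \<sigma> n a sc \<rho>"
proof -
  let ?X = "pic_class G T \<sigma> sc \<rho>"
  have XP: "?X \<in> Pic G T \<sigma>" unfolding pic_class_eq by (rule Pic_I[OF cm_Z1])
  have XN: "?X \<in> nPic G T \<sigma> n" unfolding nPic_def using XP pp by simp
  obtain b0 where b0: "b0 \<noteq> 0" "\<forall>g\<in>carrier G. pick ?X g ^ n = \<sigma> g b0 / b0"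
    using nPic_iff[OF XP] XN by blast
  have pz: "pick ?X \<in> Z1 G T \<sigma> Kunits" "rel1 Kunits cm (pick ?X)"
    unfolding pic_class_eq using cls1_pick_rel[OF subA_K cm_Z1] by auto
  have "rel1 Kunits (pick ?X) cm" by (rule rel1_sym[OF subA_K cm_Z1 pz(2)])
  then obtain b where b: "b \<noteq> 0" "\<forall>g\<in>carrier G. cm g ^ n = \<sigma> g b / b"
    using rel1_pow_cob[OF _ b0] by blast
  have gb: "Ginv_mod G \<sigma> n b" by (rule b_Ginv[OF cm_Z1 b])
  have bc: "\<forall>g\<in>carrier G. \<sigma> g b = b * cm g ^ n" using b by simp
  interpret B: PGcb G T \<sigma> cm b n
    by unfold_locales (use cm_Z1 b(1) bc n in auto)
  obtain q where qF: "q \<in> irrF B.Pb" using irr_exists[of B.Pb] B.Pb_degree n by auto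
  have qs: "\<forall>g\<in>carrier G. q dvd B.tw g q" by (rule B.stable[OF hyp qF])
  interpret F: PGfin G T \<sigma> cm b n q
    by unfold_locales (use qF qs in auto)
  let ?L = "Lf q"
  let ?\<iota> = "\<lambda>x. enc q [:x:]"
  let ?\<alpha> = "enc q [:0, 1:]"
  let ?j = "\<lambda>m. enc q (smult (crd m) [:0, 1:])"
  have jinj: "inj ?j"
  proof (rule injI)
    fix m m' assume e: "?j m = ?j m'"
    show "m = m'"
    proof (cases "crd m = crd m'")
      case True then show ?thesis using crd_prop[of m] crd_prop[of m'] by simp
    next
      case False
      have "q dvd smult (crd m) [:0, 1:] - smult (crd m') [:0, 1:]"
        using e unfolding enc_eq_iff by (simp add: mod_eq_dvd_iff)
      then have "q dvd smult (crd m - crd m') [:0, 1:]" by (simp add: smult_diff_left)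
      then have qx: "q dvd [:0, 1:]" by (rule dvd_smult_cancel) (use False in simp)
      have "[:0, 1:] dvd ([:0, 1:] :: 'b poly) ^ n" using n by (simp add: dvd_power)
      then have "q dvd [:0, 1:] ^ n" using qx by (rule dvd_trans[rotated])
      then have "q dvd [:0, 1:] ^ n - B.Pb" using F.q_dvd by (rule dvd_diff)
      then have "q dvd [:b:]" unfolding B.Pb_def by simp
      then have "degree q \<le> degree [:b:]" by (rule dvd_imp_degree_le) (use b(1) in simp)
      then show ?thesis using F.q_pos by simp
    qed
  qed
  have "contained_in_root_ext G T \<sigma> n b sc \<rho>"
    unfolding contained_in_root_ext_def
  proof (rule exI[of _ ?L], rule exI[of _ ?\<iota>], rule exI[of _ ?\<alpha>], rule exI[of _ F.tau], rule exI[of _ ?j],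
      intro conjI allI ballI)
    show "field ?L" by (rule Lf_field[OF F.q_irr])
    show "?\<iota> 1 = \<one>\<^bsub>?L\<^esub>" by (simp add: Lf_one one_pCons)
    show "?\<alpha> \<in> carrier ?L" by simp
    show "?\<alpha> [^]\<^bsub>?L\<^esub> n = ?\<iota> b" by (rule F.alpha_pow_n)
    show "inj ?j" by (rule jinj)
  next
    fix x show "?\<iota> x \<in> carrier ?L" by simp
  next
    fix x y show "?\<iota> (x + y) = ?\<iota> x \<oplus>\<^bsub>?L\<^esub> ?\<iota> y" by simp
  next
    fix x y show "?\<iota> (x * y) = ?\<iota> x \<otimes>\<^bsub>?L\<^esub> ?\<iota> y" by (simp add: mult.commute)
  next
    fix x assume "x \<in> carrier ?L"
    then show "\<exists>cc. x = (\<Oplus>\<^bsub>?L\<^esub>i\<in>{..<n}. ?\<iota> (cc i) \<otimes>\<^bsub>?L\<^esub> ?\<alpha> [^]\<^bsub>?L\<^esub> i)" by (rule F.span)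
  next
    fix g assume "g \<in> carrier G"
    then show "bij_betw (F.tau g) (carrier ?L) (carrier ?L)" by (rule F.tau_bij)
  next
    fix g x y assume "g \<in> carrier G" "x \<in> carrier ?L" "y \<in> carrier ?L"
    then show "F.tau g (x \<oplus>\<^bsub>?L\<^esub> y) = F.tau g x \<oplus>\<^bsub>?L\<^esub> F.tau g y" by (rule F.tau_add)
  next
    fix g x y assume "g \<in> carrier G" "x \<in> carrier ?L" "y \<in> carrier ?L"
    then show "F.tau g (x \<otimes>\<^bsub>?L\<^esub> y) = F.tau g x \<otimes>\<^bsub>?L\<^esub> F.tau g y" by (rule F.tau_mult)
  next
    fix g x assume "g \<in> carrier G"
    then show "F.tau g (?\<iota> x) = ?\<iota> (\<sigma> g x)" by (rule F.tau_iota)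
  next
    fix x assume "x \<in> carrier ?L"
    then show "F.tau \<one> x = x" by (rule F.tau_one)
  next
    fix g h x assume "g \<in> carrier G" "h \<in> carrier G" "x \<in> carrier ?L"
    then show "F.tau (g \<otimes> h) x = F.tau g (F.tau h x)" by (rule F.tau_comp)
  next
    fix x assume "x \<in> carrier ?L"
    show "openin T {g \<in> carrier G. F.tau g x = x}" by (rule F.tau_open)
  next
    fix m show "?j m \<in> carrier ?L" by simp
  next
    fix m m' show "?j (m + m') = ?j m \<oplus>\<^bsub>?L\<^esub> ?j m'" by (simp add: crd_add smult_add_left)
  next
    fix a m show "?j (sc a m) = ?\<iota> a \<otimes>\<^bsub>?L\<^esub> ?j m" by (simp add: crd_sc mult.commute)
  next
    fix g m assume g: "g \<in> carrier G"
    have tw: "B.tw g (smult (crd m) [:0, 1:]) = smult (\<sigma> g (crd m)) [:0, cm g:]"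
      by (simp only: B.tw_smult[OF g] B.tw_X[OF g])
    have "F.tau g (?j m) = enc q (B.tw g (smult (crd m) [:0, 1:]))" by (rule F.tau_enc[OF g])
    also have "\<dots> = enc q (smult (\<sigma> g (crd m)) [:0, cm g:])" unfolding tw ..
    also have "\<dots> = ?j (\<rho> g m)" using g by (simp add: crd_rho)
    finally show "?j (\<rho> g m) = F.tau g (?j m)" by simp
  qed
  then show ?thesis using gb by blast
qed

end

theorem proposition5p21:
  fixes G :: "'g monoid" and T :: "'g topology" and \<sigma> :: "'g \<Rightarrow> 'k::field \<Rightarrow> 'k" and n :: nat
  assumes "perm_group G T" and "smooth_G_field G T \<sigma>" and "n > 0"
  shows
    "phi1 G T \<sigma> ` H1 G T \<sigma> (mu n) \<subseteq> nPic G T \<sigma> n \<and>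
     phi2 G T \<sigma> n ` nPic G T \<sigma> n \<subseteq> Mgrp G \<sigma> n \<and>
     phi3 G T \<sigma> n ` Mgrp G \<sigma> n \<subseteq> H2 G T \<sigma> (mu n) \<and>
     (\<forall>X\<in>H1 G T \<sigma> (mu n). \<forall>Y\<in>H1 G T \<sigma> (mu n).
        phi1 G T \<sigma> (mult1 G T \<sigma> (mu n) X Y) = mult1 G T \<sigma> Kunits (phi1 G T \<sigma> X) (phi1 G T \<sigma> Y)) \<and>
     (\<forall>X\<in>nPic G T \<sigma> n. \<forall>Y\<in>nPic G T \<sigma> n.
        phi2 G T \<sigma> n (mult1 G T \<sigma> Kunits X Y) = Mmult G \<sigma> n (phi2 G T \<sigma> n X) (phi2 G T \<sigma> n Y)) \<and>
     (\<forall>X\<in>Mgrp G \<sigma> n. \<forall>Y\<in>Mgrp G \<sigma> n.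
        phi3 G T \<sigma> n (Mmult G \<sigma> n X Y) = mult2 G T \<sigma> (mu n) (phi3 G T \<sigma> n X) (phi3 G T \<sigma> n Y)) \<and>
     phi1 G T \<sigma> ` H1 G T \<sigma> (mu n) = {X \<in> nPic G T \<sigma> n. phi2 G T \<sigma> n X = Mcls G \<sigma> n 1} \<and>
     phi2 G T \<sigma> n ` nPic G T \<sigma> n = {Y \<in> Mgrp G \<sigma> n. phi3 G T \<sigma> n Y = cls2 G T \<sigma> (mu n) (\<lambda>_. 1)} \<and>
     ((\<forall>H. subgroup H G \<and> openin T H \<and> finite (rcosets\<^bsub>G\<^esub> H) \<longrightarrow> H = carrier G) \<longrightarrow>
        (\<forall>(sc :: 'k \<Rightarrow> 'm::ab_group_add \<Rightarrow> 'm) \<rho>.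
           invertible_obj G T \<sigma> sc \<rho> \<and>
           pic_pow G T \<sigma> (pic_class G T \<sigma> sc \<rho>) n = pic_one G T \<sigma> \<and>
           (\<forall>k. 0 < k \<and> k < n \<longrightarrow> pic_pow G T \<sigma> (pic_class G T \<sigma> sc \<rho>) k \<noteq> pic_one G T \<sigma>) \<longrightarrow>
           (\<exists>a. Ginv_mod G \<sigma> n a \<and> contained_in_root_ext G T \<sigma> n a sc \<rho>)))"
proof -
  interpret PG G T \<sigma> using assms(1,2) by (rule PG.intro)
  have last: "(\<forall>H. subgroup H G \<and> openin T H \<and> finite (rcosets\<^bsub>G\<^esub> H) \<longrightarrow> H = carrier G) \<longrightarrow>
        (\<forall>(sc :: 'k \<Rightarrow> 'm::ab_group_add \<Rightarrow> 'm) \<rho>.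
           invertible_obj G T \<sigma> sc \<rho> \<and>
           pic_pow G T \<sigma> (pic_class G T \<sigma> sc \<rho>) n = pic_one G T \<sigma> \<and>
           (\<forall>k. 0 < k \<and> k < n \<longrightarrow> pic_pow G T \<sigma> (pic_class G T \<sigma> sc \<rho>) k \<noteq> pic_one G T \<sigma>) \<longrightarrow>
           (\<exists>a. Ginv_mod G \<sigma> n a \<and> contained_in_root_ext G T \<sigma> n a sc \<rho>))"
  proof (intro impI allI)
    fix sc :: "'k \<Rightarrow> 'm::ab_group_add \<Rightarrow> 'm" and \<rho>
    assume hyp: "\<forall>H. subgroup H G \<and> openin T H \<and> finite (rcosets\<^bsub>G\<^esub> H) \<longrightarrow> H = carrier G"
      and A: "invertible_obj G T \<sigma> sc \<rho> \<and>
           pic_pow G T \<sigma> (pic_class G T \<sigma> sc \<rho>) n = pic_one G T \<sigma> \<and>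
           (\<forall>k. 0 < k \<and> k < n \<longrightarrow> pic_pow G T \<sigma> (pic_class G T \<sigma> sc \<rho>) k \<noteq> pic_one G T \<sigma>)"
    interpret M: PGm G T \<sigma> sc \<rho> by unfold_locales (use A in blast)
    show "\<exists>a. Ginv_mod G \<sigma> n a \<and> contained_in_root_ext G T \<sigma> n a sc \<rho>"
      by (rule M.main_field[OF hyp _ assms(3)]) (use A in blast)
  qed
  have c1: "phi1 G T \<sigma> ` H1 G T \<sigma> (mu n) \<subseteq> nPic G T \<sigma> n" using C1 by blast
  have c2: "phi2 G T \<sigma> n ` nPic G T \<sigma> n \<subseteq> Mgrp G \<sigma> n" using C2 by blast
  have c3: "phi3 G T \<sigma> n ` Mgrp G \<sigma> n \<subseteq> H2 G T \<sigma> (mu n)" using C3 by blast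
  have c4: "\<forall>X\<in>H1 G T \<sigma> (mu n). \<forall>Y\<in>H1 G T \<sigma> (mu n).
        phi1 G T \<sigma> (mult1 G T \<sigma> (mu n) X Y) = mult1 G T \<sigma> Kunits (phi1 G T \<sigma> X) (phi1 G T \<sigma> Y)"
    using C4 by blast
  have c5: "\<forall>X\<in>nPic G T \<sigma> n. \<forall>Y\<in>nPic G T \<sigma> n.
        phi2 G T \<sigma> n (mult1 G T \<sigma> Kunits X Y) = Mmult G \<sigma> n (phi2 G T \<sigma> n X) (phi2 G T \<sigma> n Y)"
    using C5 by blast
  have c6: "\<forall>X\<in>Mgrp G \<sigma> n. \<forall>Y\<in>Mgrp G \<sigma> n.
        phi3 G T \<sigma> n (Mmult G \<sigma> n X Y) = mult2 G T \<sigma> (mu n) (phi3 G T \<sigma> n X) (phi3 G T \<sigma> n Y)"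
    using C6 by blast
  show ?thesis
    by (intro conjI c1 c2 c3 c4 c5 c6 C7 C8 last)
qed

end
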